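(* Let $K\ge 3$ and $m\in\mathbb{N}$, and let $N^{\star}$ be the fine-tuning capacity (for $K$ samples) of 3-layer fully-connected ReLU networks with $m$ hidden neurons. 1. If $K\le\left\lfloor\frac{m^2}{16}\right\rfloor$, then $N^{\star}=K$. 2. If $\left\lfloor\frac{m^2}{16}\right\rfloor+1\le K<\frac{m^2+m+4}{2}$, then $\left\lfloor\frac{m^2}{108}-\frac23\right\rfloor\le N^{\star}\le K$. 3. If $K\ge\frac{m^2+m+4}{2}$, then $\left\lfloor\frac{m^2}{108}-\frac23\right\rfloor\le N^{\star}\le\frac{m^2+m}{6}$.
   Context: $[K]=\{1,\dots,K\}$. A 3-layer fully-connected ReLU network with $m$ hidden neurons is $g({\bm{x}}) = {\bm{W}}_3\sigma({\bm{W}}_2\sigma({\bm{W}}_1{\bm{x}}+{\bm{b}}_1)+{\bm{b}}_2)+b_3$ with hidden widths $d_1,d_2$, $m=d_1+d_2$, and $\sigma(t)=\max\{t,0\}$ coordinatewise. Target values are assumed to lie in $[-1,1]$. The fine-tuning capacity $N^{\star}$ of this class is the largest $N\in\{0,\dots,K\}$ such that for every $T\subseteq[K]$ with $|T|=N$, every pairwise distinct ${\bm{x}}_1,\dots,{\bm{x}}_K\in\mathbb{R}^d$ and every $z_1,\dots,z_K\in[-1,1]$, there exist parameters with $g({\bm{x}}_i)=z_i$ for $i\in T$ and $g({\bm{x}}_i)=0$ for $i\in[K]\setminus T$. *)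

theory Defs
  imports "HOL-Analysis.Analysis"
begin

definition relu :: "real \<Rightarrow> real" where
  "relu t = max t 0"

definition net3 ::
  "nat \<Rightarrow> nat \<Rightarrow> (nat \<Rightarrow> real^'n) \<Rightarrow> (nat \<Rightarrow> real) \<Rightarrow> (nat \<Rightarrow> nat \<Rightarrow> real)
   \<Rightarrow> (nat \<Rightarrow> real) \<Rightarrow> (nat \<Rightarrow> real) \<Rightarrow> real \<Rightarrow> real^'n \<Rightarrow> real" where
  "net3 d1 d2 W1 b1 W2 b2 W3 b3 x =
     (\<Sum>k<d2. W3 k * relu ((\<Sum>j<d1. W2 k j * relu (W1 j \<bullet> x + b1 j)) + b2 k)) + b3"

definition ft_feasible :: "nat \<Rightarrow> nat \<Rightarrow> nat \<Rightarrow> ('n::finite) itself \<Rightarrow> bool" where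
  "ft_feasible m K N _ \<longleftrightarrow>
     (\<forall>T. T \<subseteq> {1..K} \<longrightarrow> card T = N \<longrightarrow>
      (\<forall>(x :: nat \<Rightarrow> real^'n) (z :: nat \<Rightarrow> real).
         inj_on x {1..K} \<longrightarrow> (\<forall>i\<in>{1..K}. \<bar>z i\<bar> \<le> 1) \<longrightarrow>
         (\<exists>d1 d2 W1 b1 W2 b2 W3 b3. d1 + d2 = m \<and>
            (\<forall>i\<in>T. net3 d1 d2 W1 b1 W2 b2 W3 b3 (x i) = z i) \<and>
            (\<forall>i\<in>{1..K} - T. net3 d1 d2 W1 b1 W2 b2 W3 b3 (x i) = 0))))"

definition ft_capacity :: "nat \<Rightarrow> nat \<Rightarrow> ('n::finite) itself \<Rightarrow> nat" where
  "ft_capacity m K t = (GREATEST N. N \<le> K \<and> ft_feasible m K N t)"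

end

theory Submission
  imports Defs
begin

definition aff :: "(real \<Rightarrow> real) \<Rightarrow> real \<Rightarrow> real \<Rightarrow> bool" where
  "aff G u v \<longleftrightarrow> (\<exists>a b. \<forall>t\<in>{u..v}. G t = a + b * t)"

lemma aff_const: "aff (\<lambda>t. c) u v"
  unfolding aff_def by (intro exI[of _ c] exI[of _ 0]) simp

lemma aff_add: "aff f u v \<Longrightarrow> aff g u v \<Longrightarrow> aff (\<lambda>t. f t + g t) u v"
proof -
  assume "aff f u v" "aff g u v"
  then obtain a1 b1 a2 b2 where "\<forall>t\<in>{u..v}. f t = a1 + b1 * t" "\<forall>t\<in>{u..v}. g t = a2 + b2 * t"
    unfolding aff_def by blast
  then show ?thesis unfolding aff_def
    by (intro exI[of _ "a1+a2"] exI[of _ "b1+b2"]) (simp add: algebra_simps)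
qed

lemma aff_cmul: "aff f u v \<Longrightarrow> aff (\<lambda>t. c * f t) u v"
proof -
  assume "aff f u v"
  then obtain a1 b1 where "\<forall>t\<in>{u..v}. f t = a1 + b1 * t"
    unfolding aff_def by blast
  then show ?thesis unfolding aff_def
    by (intro exI[of _ "c*a1"] exI[of _ "c*b1"]) (simp add: algebra_simps)
qed

lemma aff_sum: "finite S \<Longrightarrow> (\<And>k. k \<in> S \<Longrightarrow> aff (f k) u v) \<Longrightarrow> aff (\<lambda>t. \<Sum>k\<in>S. f k t) u v"
proof (induction S rule: finite_induct)
  case empty
  then show ?case using aff_const[of 0] by simp
next
  case (insert x F)
  have "aff (\<lambda>t. f x t + (\<Sum>k\<in>F. f k t)) u v"
    using insert by (intro aff_add) auto
  then show ?case using insert by simp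
qed

lemma aff_lin: "aff (\<lambda>t. a * t + e) u v"
  unfolding aff_def by (intro exI[of _ e] exI[of _ a]) (simp add: algebra_simps)

lemma aff_relu_lin:
  assumes "\<forall>t\<in>{u<..<v}. a * t + e \<noteq> 0 \<or> a = 0"
  shows "aff (\<lambda>t. relu (a * t + e)) u v"
proof (cases "a = 0")
  case True
  then show ?thesis using aff_const[of "relu e"] by simp
next
  case False
  define z where "z = - e / a"
  have lin: "a * t + e = a * (t - z)" for t using False by (simp add: z_def field_simps)
  have zn: "z \<notin> {u<..<v}" using assms False lin by force
  show ?thesis
  proof (cases "z \<le> u")
    case True
    show ?thesis
    proof (cases "a > 0")
      case True
      have "\<forall>t\<in>{u..v}. relu (a * t + e) = a * t + e"
        using \<open>z \<le> u\<close> True by (auto simp: relu_def lin intro!: max_absorb1 mult_nonneg_nonneg)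
      then show ?thesis unfolding aff_def by (intro exI[of _ e] exI[of _ a]) (auto simp: algebra_simps)
    next
      case False
      have "\<forall>t\<in>{u..v}. relu (a * t + e) = 0"
        using \<open>z \<le> u\<close> False by (auto simp: relu_def lin intro!: max_absorb2 mult_nonpos_nonneg)
      then show ?thesis unfolding aff_def by (intro exI[of _ 0] exI[of _ 0]) auto
    qed
  next
    case False
    then have "z \<ge> v" using zn by auto
    show ?thesis
    proof (cases "a > 0")
      case True
      have "\<forall>t\<in>{u..v}. relu (a * t + e) = 0"
        using \<open>z \<ge> v\<close> True by (auto simp: relu_def lin intro!: max_absorb2 mult_nonneg_nonpos)
      then show ?thesis unfolding aff_def by (intro exI[of _ 0] exI[of _ 0]) auto
    next
      case False
      have "\<forall>t\<in>{u..v}. relu (a * t + e) = a * t + e"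
        using \<open>z \<ge> v\<close> False by (auto simp: relu_def lin intro!: max_absorb1 mult_nonpos_nonpos)
      then show ?thesis unfolding aff_def by (intro exI[of _ e] exI[of _ a]) (auto simp: algebra_simps)
    qed
  qed
qed

lemma witness:
  fixes G :: "real \<Rightarrow> real"
  assumes "finite B" "a < b" "R (G b - G a)" "\<And>x y. R (x + y) \<Longrightarrow> R x \<or> R y"
  shows "\<exists>u v. a \<le> u \<and> u < v \<and> v \<le> b \<and> B \<inter> {u<..<v} = {} \<and> R (G v - G u)"
  using assms(2,3)
proof (induction "card (B \<inter> {a<..<b})" arbitrary: a b rule: less_induct)
  case less
  show ?case
  proof (cases "B \<inter> {a<..<b} = {}")
    case True
    show ?thesis apply (rule exI[of _ a], rule exI[of _ b]) using less.prems True by auto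
  next
    case False
    then obtain c where c: "c \<in> B" "a < c" "c < b" by auto
    have fin: "finite (B \<inter> {a<..<b})" using assms(1) by simp
    have "R (G c - G a) \<or> R (G b - G c)"
      using assms(4)[of "G c - G a" "G b - G c"] less.prems by simp
    then show ?thesis
    proof
      assume h: "R (G c - G a)"
      have "B \<inter> {a<..<c} \<subset> B \<inter> {a<..<b}" using c by auto
      then have "card (B \<inter> {a<..<c}) < card (B \<inter> {a<..<b})" using fin psubset_card_mono by blast
      from less.hyps[OF this c(2) h] obtain u v where "a \<le> u \<and> u < v \<and> v \<le> c \<and> B \<inter> {u<..<v} = {} \<and> R (G v - G u)" by blast
      then show ?thesis using c apply - apply (rule exI[of _ u], rule exI[of _ v]) by auto
    next
      assume h: "R (G b - G c)"
      have "B \<inter> {c<..<b} \<subset> B \<inter> {a<..<b}" using c by auto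
      then have "card (B \<inter> {c<..<b}) < card (B \<inter> {a<..<b})" using fin psubset_card_mono by blast
      from less.hyps[OF this c(3) h] obtain u v where "c \<le> u \<and> u < v \<and> v \<le> b \<and> B \<inter> {u<..<v} = {} \<and> R (G v - G u)" by blast
      then show ?thesis using c apply - apply (rule exI[of _ u], rule exI[of _ v]) by auto
    qed
  qed
qed

lemma chain:
  fixes G :: "real \<Rightarrow> real" and p d :: "nat \<Rightarrow> real" and s :: "nat \<Rightarrow> bool"
  assumes finB: "finite B"
    and AFF: "\<And>u v. u < v \<Longrightarrow> B \<inter> {u<..<v} = {} \<Longrightarrow> aff G u v"
    and pinc: "\<And>i. i < r \<Longrightarrow> p i < p (Suc i)"
    and req: "\<And>i. i < r \<Longrightarrow> (if s i then d i * (G (p (Suc i)) - G (p i)) > 0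
                                   else d i * (G (p (Suc i)) - G (p i)) \<ge> 0)"
    and alt: "\<And>i. Suc i < r \<Longrightarrow> d (Suc i) = - d i \<and> (s i \<or> s (Suc i))"
  shows "r - 1 \<le> card B"
proof -
  define RR where "RR i x = (if s i then d i * x > 0 else d i * x \<ge> 0)" for i x
  have RRadd: "RR i (x + y) \<Longrightarrow> RR i x \<or> RR i y" for i x y
    unfolding RR_def by (cases "s i") (auto simp: distrib_left)
  have "\<forall>i. \<exists>uv. i < r \<longrightarrow> (p i \<le> fst uv \<and> fst uv < snd uv \<and> snd uv \<le> p (Suc i) \<and>
        B \<inter> {fst uv<..<snd uv} = {} \<and> RR i (G (snd uv) - G (fst uv)))"
  proof
    fix i
    show "\<exists>uv. i < r \<longrightarrow> (p i \<le> fst uv \<and> fst uv < snd uv \<and> snd uv \<le> p (Suc i) \<and>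
        B \<inter> {fst uv<..<snd uv} = {} \<and> RR i (G (snd uv) - G (fst uv)))"
    proof (cases "i < r")
      case True
      have "RR i (G (p (Suc i)) - G (p i))" using req[OF True] unfolding RR_def by simp
      from witness[of B "p i" "p (Suc i)" "RR i" G, OF finB pinc[OF True] this RRadd]
      obtain x y where "p i \<le> x \<and> x < y \<and> y \<le> p (Suc i) \<and> B \<inter> {x<..<y} = {} \<and> RR i (G y - G x)" by blast
      then show ?thesis apply - apply (rule exI[of _ "(x,y)"]) by simp
    qed simp
  qed
  from choice[OF this] obtain uv where uv0: "\<forall>i. i < r \<longrightarrow> (p i \<le> fst (uv i) \<and> fst (uv i) < snd (uv i) \<and> snd (uv i) \<le> p (Suc i) \<and>
        B \<inter> {fst (uv i)<..<snd (uv i)} = {} \<and> RR i (G (snd (uv i)) - G (fst (uv i))))"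
    by blast
  have uv: "p i \<le> fst (uv i) \<and> fst (uv i) < snd (uv i) \<and> snd (uv i) \<le> p (Suc i) \<and>
        B \<inter> {fst (uv i)<..<snd (uv i)} = {} \<and> RR i (G (snd (uv i)) - G (fst (uv i)))" if "i < r" for i
    using uv0 that by blast
  define u where "u i = fst (uv i)" for i
  define v where "v i = snd (uv i)" for i
  have uvp: "p i \<le> u i" "u i < v i" "v i \<le> p (Suc i)" "B \<inter> {u i<..<v i} = {}"
     "RR i (G (v i) - G (u i))" if "i < r" for i
    using uv[OF that] unfolding u_def v_def by auto
  have ex: "\<exists>c\<in>B. v i \<le> c \<and> c \<le> u (Suc i)" if i: "Suc i < r" for i
  proof (rule ccontr)
    assume nc: "\<not> ?thesis"
    have i1: "i < r" using i by simp
    have ord: "u i < v i" "v i \<le> u (Suc i)" "u (Suc i) < v (Suc i)"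
      using uvp[OF i1] uvp[OF i] by auto
    have "B \<inter> {u i<..<v (Suc i)} = {}"
    proof (rule ccontr)
      assume "B \<inter> {u i<..<v (Suc i)} \<noteq> {}"
      then obtain c where c: "c \<in> B" "u i < c" "c < v (Suc i)" by auto
      show False
      proof (cases "c < v i")
        case True then show ?thesis using uvp(4)[OF i1] c by auto
      next
        case False
        show ?thesis
        proof (cases "c \<le> u (Suc i)")
          case True then show ?thesis using nc c False by auto
        next
          case False then show ?thesis using uvp(4)[OF i] c by auto
        qed
      qed
    qed
    from AFF[OF _ this] ord have "aff G (u i) (v (Suc i))" by linarith
    then obtain a b where ab: "\<forall>t\<in>{u i..v (Suc i)}. G t = a + b * t" unfolding aff_def by blast
    have e1: "G (v i) - G (u i) = b * (v i - u i)" using ab ord by (simp add: algebra_simps)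
    have e2: "G (v (Suc i)) - G (u (Suc i)) = b * (v (Suc i) - u (Suc i))" using ab ord by (simp add: algebra_simps)
    have r1: "RR i (b * (v i - u i))" using uvp(5)[OF i1] e1 by simp
    have r2: "RR (Suc i) (b * (v (Suc i) - u (Suc i)))" using uvp(5)[OF i] e2 by simp
    have dd: "d (Suc i) = - d i" "s i \<or> s (Suc i)" using alt[OF i] by auto
    have pos1: "v i - u i > 0" "v (Suc i) - u (Suc i) > 0" using ord by auto
    show False
    proof (cases "s i")
      case True
      then have "d i * (b * (v i - u i)) > 0" using r1 unfolding RR_def by simp
      then have "(d i * b) * (v i - u i) > 0" by (simp add: mult.assoc)
      then have A: "d i * b > 0" using pos1 by (simp add: zero_less_mult_iff)
      have "d (Suc i) * (b * (v (Suc i) - u (Suc i))) \<ge> 0" using r2 unfolding RR_def by (auto split: if_splits)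
      then have "(d i * b) * (v (Suc i) - u (Suc i)) \<le> 0" using dd by (simp add: algebra_simps)
      then have "- (d i * b) \<ge> 0" using pos1 mult_pos_pos[of "d i * b" "v (Suc i) - u (Suc i)"] by linarith
      then show False using A by simp
    next
      case False
      then have st: "s (Suc i)" using dd by simp
      have "d i * (b * (v i - u i)) \<ge> 0" using r1 False unfolding RR_def by simp
      then have "(d i * b) * (v i - u i) \<ge> 0" by (simp add: mult.assoc)
      then have A: "d i * b \<ge> 0" using pos1 by (simp add: zero_le_mult_iff)
      have "d (Suc i) * (b * (v (Suc i) - u (Suc i))) > 0" using r2 st unfolding RR_def by simp
      then have "(d i * b) * (v (Suc i) - u (Suc i)) < 0" using dd by (simp add: algebra_simps)
      then have "- (d i * b) > 0" using pos1 mult_nonneg_nonneg[of "d i * b" "v (Suc i) - u (Suc i)"] by linarith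
      then show False using A by simp
    qed
  qed
  then have "\<forall>i. \<exists>c. Suc i < r \<longrightarrow> c \<in> B \<and> v i \<le> c \<and> c \<le> u (Suc i)" by blast
  from choice[OF this] obtain c where c0: "\<forall>i. Suc i < r \<longrightarrow> c i \<in> B \<and> v i \<le> c i \<and> c i \<le> u (Suc i)"
    by blast
  have c: "c i \<in> B \<and> v i \<le> c i \<and> c i \<le> u (Suc i)" if "Suc i < r" for i
    using c0 that by blast
  have cmono: "c i < c j" if "i < j" "Suc j < r" for i j
    using that
  proof (induction j)
    case 0 then show ?case by simp
  next
    case (Suc j)
    have "c j < c (Suc j)"
    proof -
      have "c j \<le> u (Suc j)" using c[of j] Suc.prems by simp
      also have "\<dots> < v (Suc j)" using uvp(2)[of "Suc j"] Suc.prems by simp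
      also have "\<dots> \<le> c (Suc j)" using c[of "Suc j"] Suc.prems by simp
      finally show ?thesis .
    qed
    then show ?case using Suc by (cases "i = j") auto
  qed
  have inj: "inj_on c {..<r - 1}"
  proof (rule inj_onI)
    fix i j assume "i \<in> {..<r - 1}" "j \<in> {..<r - 1}" "c i = c j"
    then have "Suc i < r" "Suc j < r" by auto
    show "i = j"
    proof (rule ccontr)
      assume "i \<noteq> j"
      then have "i < j \<or> j < i" by arith
      then show False using cmono[of i j] cmono[of j i] \<open>c i = c j\<close> \<open>Suc i < r\<close> \<open>Suc j < r\<close> by force
    qed
  qed
  have "c ` {..<r - 1} \<subseteq> B" using c by auto
  from card_inj_on_le[OF inj this finB] show ?thesis by simp
qed

definition G1 :: "nat \<Rightarrow> nat \<Rightarrow> (nat \<Rightarrow> real) \<Rightarrow> (nat \<Rightarrow> real) \<Rightarrow> (nat \<Rightarrow> nat \<Rightarrow> real)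
   \<Rightarrow> (nat \<Rightarrow> real) \<Rightarrow> (nat \<Rightarrow> real) \<Rightarrow> real \<Rightarrow> real \<Rightarrow> real" where
  "G1 d1 d2 al e W2 b2 W3 b3 t =
     (\<Sum>k<d2. W3 k * relu ((\<Sum>j<d1. W2 k j * relu (al j * t + e j)) + b2 k)) + b3"

lemma same_piece:
  fixes Zs :: "real set"
  assumes "finite Zs" "s < t" "card {z\<in>Zs. z < s} = card {z\<in>Zs. z < t}"
  shows "Zs \<inter> {s<..<t} = {}"
proof (rule ccontr)
  assume "Zs \<inter> {s<..<t} \<noteq> {}"
  then obtain z where z: "z \<in> Zs" "s < z" "z < t" by auto
  have sub: "{z\<in>Zs. z < s} \<subseteq> {z\<in>Zs. z < t}" using assms(2) by auto
  have "z \<in> {z\<in>Zs. z < t}" "z \<notin> {z\<in>Zs. z < s}" using z by auto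
  then have "{z\<in>Zs. z < s} \<subset> {z\<in>Zs. z < t}" using sub by blast
  then have "card {z\<in>Zs. z < s} < card {z\<in>Zs. z < t}" using assms(1) by (intro psubset_card_mono) auto
  then show False using assms(3) by simp
qed

lemma bp_exists:
  fixes al e :: "nat \<Rightarrow> real" and W2 :: "nat \<Rightarrow> nat \<Rightarrow> real" and b2 W3 :: "nat \<Rightarrow> real" and b3 :: real
  shows "\<exists>B. finite B \<and> card B \<le> d1 + d2 * (d1 + 1) \<and>
     (\<forall>u v. u < v \<longrightarrow> B \<inter> {u<..<v} = {} \<longrightarrow> aff (G1 d1 d2 al e W2 b2 W3 b3) u v)"
proof -
  define hk where "hk k t = (\<Sum>j<d1. W2 k j * relu (al j * t + e j)) + b2 k" for k t
  define Zs where "Zs = (\<lambda>j. - e j / al j) ` {j. j < d1 \<and> al j \<noteq> 0}"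
  define piece where "piece t = card {z\<in>Zs. z < t}" for t
  have finZ: "finite Zs" unfolding Zs_def by simp
  have cardZ: "card Zs \<le> d1"
  proof -
    have "card Zs \<le> card {j. j < d1 \<and> al j \<noteq> 0}" unfolding Zs_def by (rule card_image_le) simp
    also have "\<dots> \<le> card {..<d1}" by (rule card_mono) auto
    finally show ?thesis by simp
  qed
  have hk_aff: "aff (hk k) u v" if "u < v" "Zs \<inter> {u<..<v} = {}" for k u v
  proof -
    have "aff (\<lambda>t. relu (al j * t + e j)) u v" if "j < d1" for j
    proof (rule aff_relu_lin, intro ballI)
      fix t assume t: "t \<in> {u<..<v}"
      show "al j * t + e j \<noteq> 0 \<or> al j = 0"
      proof (rule ccontr)
        assume "\<not> ?thesis"
        then have "al j \<noteq> 0" "t = - e j / al j" by (auto simp: field_simps)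
        then have "t \<in> Zs" unfolding Zs_def using \<open>j < d1\<close> by auto
        then show False using t \<open>Zs \<inter> {u<..<v} = {}\<close> by auto
      qed
    qed
    then have "aff (\<lambda>t. \<Sum>j<d1. W2 k j * relu (al j * t + e j)) u v"
      by (intro aff_sum aff_cmul) auto
    then show ?thesis unfolding hk_def by (intro aff_add aff_const)
  qed
  define Ck where "Ck k = {t. t \<notin> Zs \<and> hk k t = 0 \<and> (\<exists>s. s \<notin> Zs \<and> piece s = piece t \<and> hk k s \<noteq> 0)}" for k
  have piece_le: "piece t \<le> card Zs" for t unfolding piece_def using finZ by (intro card_mono) auto
  have inj: "inj_on piece (Ck k)" for k
  proof (rule inj_onI, rule ccontr)
    fix t1 t2 assume t1: "t1 \<in> Ck k" and t2: "t2 \<in> Ck k" and eq: "piece t1 = piece t2" and ne: "t1 \<noteq> t2"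
    from t1 obtain s where s: "s \<notin> Zs" "piece s = piece t1" "hk k s \<noteq> 0" and h1: "hk k t1 = 0"
      unfolding Ck_def by auto
    have h2: "hk k t2 = 0" using t2 unfolding Ck_def by auto
    define lo where "lo = min t1 (min t2 s)"
    define hi where "hi = max t1 (max t2 s)"
    have plo: "piece lo = piece t1" unfolding lo_def using eq s(2) by (auto simp: min_def)
    have phi: "piece hi = piece t1" unfolding hi_def using eq s(2) by (auto simp: max_def)
    have lohi: "lo < hi" unfolding lo_def hi_def using ne by (auto simp: min_def max_def)
    have "Zs \<inter> {lo<..<hi} = {}"
      using same_piece[OF finZ lohi] plo phi unfolding piece_def by simp
    from hk_aff[OF lohi this] obtain a b where ab: "\<forall>t\<in>{lo..hi}. hk k t = a + b * t"
      unfolding aff_def by blast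
    have "t1 \<in> {lo..hi}" "t2 \<in> {lo..hi}" "s \<in> {lo..hi}" unfolding lo_def hi_def by auto
    then have "a + b * t1 = 0" "a + b * t2 = 0" "a + b * s \<noteq> 0" using ab h1 h2 s(3) by auto
    moreover have "b * (t1 - t2) = (a + b * t1) - (a + b * t2)" by (simp add: algebra_simps)
    ultimately have "b * (t1 - t2) = 0" by simp
    then have "b = 0" using ne by simp
    then show False using \<open>a + b * t1 = 0\<close> \<open>a + b * s \<noteq> 0\<close> by simp
  qed
  have img: "piece ` Ck k \<subseteq> {..card Zs}" for k using piece_le by auto
  have finC: "finite (Ck k)" for k using inj_on_finite[OF inj img] by simp
  have cardC: "card (Ck k) \<le> d1 + 1" for k
  proof -
    have "card (Ck k) \<le> card {..card Zs}" by (rule card_inj_on_le[OF inj img]) simp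
    then show ?thesis using cardZ by simp
  qed
  define B where "B = Zs \<union> (\<Union>k<d2. Ck k)"
  have finB: "finite B" unfolding B_def using finZ finC by auto
  have "card B \<le> card Zs + card (\<Union>k<d2. Ck k)" unfolding B_def by (rule card_Un_le)
  also have "card (\<Union>k<d2. Ck k) \<le> (\<Sum>k<d2. card (Ck k))" by (rule card_UN_le) simp
  also have "\<dots> \<le> d2 * (d1 + 1)" using sum_bounded_above[of "{..<d2}" "\<lambda>k. card (Ck k)" "d1 + 1"] cardC by simp
  finally have cardB: "card B \<le> d1 + d2 * (d1 + 1)" using cardZ by simp
  have AFF: "aff (G1 d1 d2 al e W2 b2 W3 b3) u v" if uv: "u < v" "B \<inter> {u<..<v} = {}" for u v
  proof -
    have Z0: "Zs \<inter> {u<..<v} = {}" using uv unfolding B_def by auto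
    have "aff (\<lambda>t. relu (hk k t)) u v" if k: "k < d2" for k
    proof -
      from hk_aff[OF uv(1) Z0] obtain a b where ab: "\<forall>t\<in>{u..v}. hk k t = a + b * t"
        unfolding aff_def by blast
      show ?thesis
      proof (cases "b = 0")
        case True
        then have "\<forall>t\<in>{u..v}. relu (hk k t) = relu a" using ab by simp
        then show ?thesis unfolding aff_def by (intro exI[of _ "relu a"] exI[of _ 0]) simp
      next
        case False
        define t0 where "t0 = - a / b"
        have hlin: "\<forall>t\<in>{u..v}. hk k t = b * (t - t0)" using ab False by (simp add: t0_def field_simps)
        have t0n: "t0 \<notin> {u<..<v}"
        proof
          assume t0: "t0 \<in> {u<..<v}"
          define s where "s = (t0 + v) / 2"
          have s: "s \<in> {u<..<v}" "t0 < s" using t0 unfolding s_def by auto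
          have "hk k s \<noteq> 0" using hlin s False by auto
          moreover have "hk k t0 = 0" using hlin t0 by auto
          moreover have "t0 \<notin> Zs" "s \<notin> Zs" using Z0 t0 s by auto
          moreover have "piece s = piece t0"
          proof -
            have "{z\<in>Zs. z < s} = {z\<in>Zs. z < t0}" using Z0 s t0 by auto
            then show ?thesis unfolding piece_def by simp
          qed
          ultimately have "t0 \<in> Ck k" unfolding Ck_def by auto
          then have "t0 \<in> B" unfolding B_def using k by auto
          then show False using uv(2) t0 by auto
        qed
        have "aff (\<lambda>t. relu (b * t + (- b * t0))) u v"
        proof (rule aff_relu_lin, intro ballI)
          fix t assume "t \<in> {u<..<v}"
          then have "t \<noteq> t0" using t0n by auto
          then show "b * t + - b * t0 \<noteq> 0 \<or> b = 0" using False by (simp add: algebra_simps)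
        qed
        then obtain a' b' where "\<forall>t\<in>{u..v}. relu (b * t + - b * t0) = a' + b' * t" unfolding aff_def by blast
        have "\<forall>t\<in>{u..v}. relu (hk k t) = a' + b' * t"
        proof
          fix t assume t: "t \<in> {u..v}"
          then have "hk k t = b * t + - b * t0" using hlin by (simp add: algebra_simps)
          then show "relu (hk k t) = a' + b' * t" using t \<open>\<forall>t\<in>{u..v}. relu (b * t + - b * t0) = a' + b' * t\<close> by simp
        qed
        then show ?thesis unfolding aff_def by blast
      qed
    qed
    then have "aff (\<lambda>t. \<Sum>k<d2. W3 k * relu (hk k t)) u v" by (intro aff_sum aff_cmul) auto
    then have "aff (\<lambda>t. (\<Sum>k<d2. W3 k * relu (hk k t)) + b3) u v" by (intro aff_add aff_const)
    then show ?thesis unfolding G1_def hk_def by simp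
  qed
  show ?thesis
    apply (rule exI[of _ B])
    using finB cardB AFF by simp
qed

lemma net3_line:
  fixes W1 :: "nat \<Rightarrow> real^'n::finite"
  shows "net3 d1 d2 W1 b1 W2 b2 W3 b3 (r *\<^sub>R (\<chi> j. 1)) = G1 d1 d2 (\<lambda>j. W1 j \<bullet> (\<chi> j. 1)) b1 W2 b2 W3 b3 r"
  unfolding net3_def G1_def by (simp add: inner_scaleR_right mult.commute)

lemma G1_const: "d1 = 0 \<or> d2 = 0 \<Longrightarrow> G1 d1 d2 al e W2 b2 W3 b3 t = G1 d1 d2 al e W2 b2 W3 b3 s"
  unfolding G1_def by auto

definition btw :: "real \<Rightarrow> real \<Rightarrow> real \<Rightarrow> bool" where
  "btw a b c \<longleftrightarrow> (a \<le> b \<and> b \<le> c) \<or> (c \<le> b \<and> b \<le> a)"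

lemma relu_mono: "a \<le> b \<Longrightarrow> relu a \<le> relu b"
  unfolding relu_def by simp

lemma btw_aff: "btw x y z \<Longrightarrow> btw (w * x + b) (w * y + b) (w * z + b)"
proof -
  assume h: "btw x y z"
  show ?thesis
  proof (cases "w \<ge> 0")
    case True
    then show ?thesis using h unfolding btw_def by (auto intro: mult_left_mono)
  next
    case False
    then have "w \<le> 0" by simp
    then show ?thesis using h unfolding btw_def by (auto intro: mult_left_mono_neg)
  qed
qed

lemma btw_relu: "btw x y z \<Longrightarrow> btw (relu x) (relu y) (relu z)"
  unfolding btw_def using relu_mono by blast

lemma mono11:
  "\<not> (G1 1 1 al e W2 b2 W3 b3 3 < G1 1 1 al e W2 b2 W3 b3 2 \<and> G1 1 1 al e W2 b2 W3 b3 3 < G1 1 1 al e W2 b2 W3 b3 4)"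
proof -
  have g: "G1 1 1 al e W2 b2 W3 b3 t = W3 0 * relu (W2 0 0 * relu (al 0 * t + e 0) + b2 0) + b3" for t
    unfolding G1_def by simp
  have "btw (2::real) 3 4" unfolding btw_def by simp
  then have "btw (al 0 * 2 + e 0) (al 0 * 3 + e 0) (al 0 * 4 + e 0)" by (rule btw_aff)
  then have "btw (relu (al 0 * 2 + e 0)) (relu (al 0 * 3 + e 0)) (relu (al 0 * 4 + e 0))" by (rule btw_relu)
  then have "btw (W2 0 0 * relu (al 0 * 2 + e 0) + b2 0) (W2 0 0 * relu (al 0 * 3 + e 0) + b2 0) (W2 0 0 * relu (al 0 * 4 + e 0) + b2 0)" by (rule btw_aff)
  then have "btw (relu (W2 0 0 * relu (al 0 * 2 + e 0) + b2 0)) (relu (W2 0 0 * relu (al 0 * 3 + e 0) + b2 0)) (relu (W2 0 0 * relu (al 0 * 4 + e 0) + b2 0))" by (rule btw_relu)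
  then have "btw (G1 1 1 al e W2 b2 W3 b3 2) (G1 1 1 al e W2 b2 W3 b3 3) (G1 1 1 al e W2 b2 W3 b3 4)"
    unfolding g by (rule btw_aff)
  then show ?thesis unfolding btw_def by auto
qed

lemma sgn_pow: "(-1::real)^i * (-1)^i = 1"
  by (cases "even i") auto

lemma ft_feasibleD:
  fixes x :: "nat \<Rightarrow> real^'n::finite"
  assumes "ft_feasible m K N TYPE('n)" "T \<subseteq> {1..K}" "card T = N" "inj_on x {1..K}" "\<forall>i\<in>{1..K}. \<bar>z i\<bar> \<le> 1"
  shows "\<exists>d1 d2 W1 b1 W2 b2 W3 b3. d1 + d2 = m \<and>
            (\<forall>i\<in>T. net3 d1 d2 W1 b1 W2 b2 W3 b3 (x i) = z i) \<and>
            (\<forall>i\<in>{1..K} - T. net3 d1 d2 W1 b1 W2 b2 W3 b3 (x i) = 0)"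
proof -
  have "\<forall>T. T \<subseteq> {1..K} \<longrightarrow> card T = N \<longrightarrow>
      (\<forall>(x :: nat \<Rightarrow> real^'n) (z :: nat \<Rightarrow> real).
         inj_on x {1..K} \<longrightarrow> (\<forall>i\<in>{1..K}. \<bar>z i\<bar> \<le> 1) \<longrightarrow>
         (\<exists>d1 d2 W1 b1 W2 b2 W3 b3. d1 + d2 = m \<and>
            (\<forall>i\<in>T. net3 d1 d2 W1 b1 W2 b2 W3 b3 (x i) = z i) \<and>
            (\<forall>i\<in>{1..K} - T. net3 d1 d2 W1 b1 W2 b2 W3 b3 (x i) = 0)))"
    using assms(1) unfolding ft_feasible_def by simp
  note h = mp[OF mp[OF spec[OF this, of T] assms(2)] assms(3)]
  note h2 = spec[OF spec[OF h, of x], of z]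
  show ?thesis using mp[OF mp[OF h2 assms(4)] assms(5)] .
qed

lemma upper_nf:
  fixes K N m :: nat
  assumes K3: "K \<ge> 3" and NK: "N \<le> K" and N1: "N \<ge> 1"
    and H: "\<And>d1 d2. d1 + d2 = m \<Longrightarrow> d1 = 0 \<or> d2 = 0 \<or> (d1 = 1 \<and> d2 = 1 \<and> K \<ge> 4)
               \<or> d1 + d2 * (d1 + 1) + 2 < min K (3 * N + 2)"
  shows "\<not> ft_feasible m K N TYPE('n::finite)"
proof
  assume feas: "ft_feasible m K N TYPE('n)"
  define C where "C = min K (3 * N + 2)"
  have C3: "C \<ge> 3" "C \<le> K" "C \<le> 3 * N + 2" using K3 N1 unfolding C_def by auto
  define T0 where "T0 = {i \<in> {1..C}. 3 dvd i}"
  have T0sub: "T0 \<subseteq> {1..K}" using C3 unfolding T0_def by auto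
  have "T0 \<subseteq> (\<lambda>j. 3 * j) ` {1..C div 3}"
  proof
    fix i assume i: "i \<in> T0"
    then have "i = 3 * (i div 3)" "1 \<le> i div 3" "i div 3 \<le> C div 3" unfolding T0_def by (auto intro: div_le_mono)
    then show "i \<in> (\<lambda>j. 3 * j) ` {1..C div 3}" by force
  qed
  then have "card T0 \<le> card ((\<lambda>j. 3 * j) ` {1..C div 3})" by (intro card_mono) auto
  also have "\<dots> \<le> C div 3" using card_image_le[of "{1..C div 3}" "\<lambda>j. 3 * j"] by simp
  also have "\<dots> \<le> N" using C3 by simp
  finally have cT0: "card T0 \<le> N" .
  have finT0: "finite T0" unfolding T0_def by simp
  have "card ({1..K} - T0) = K - card T0" using T0sub finT0 by (simp add: card_Diff_subset)
  then have "N - card T0 \<le> card ({1..K} - T0)" using NK by simp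
  then obtain E where E: "E \<subseteq> {1..K} - T0" "card E = N - card T0" "finite E"
    by (rule obtain_subset_with_card_n)
  define T where "T = T0 \<union> E"
  have Tsub: "T \<subseteq> {1..K}" using T0sub E unfolding T_def by auto
  have cT: "card T = N" unfolding T_def using E finT0 cT0 by (subst card_Un_disjoint) auto
  have T0T: "T0 \<subseteq> T" unfolding T_def by auto
  define one :: "real^'n" where "one = (\<chi> j. 1)"
  define x :: "nat \<Rightarrow> real^'n" where "x i = real i *\<^sub>R one" for i
  define z :: "nat \<Rightarrow> real" where "z i = (-1)^i" for i
  have injx: "inj_on x {1..K}"
  proof (rule inj_onI)
    fix i j assume "x i = x j"
    then have "(x i) $ undefined = (x j) $ undefined" by simp
    then show "i = j" unfolding x_def one_def by simp
  qed
  have zb: "\<forall>i\<in>{1..K}. \<bar>z i\<bar> \<le> 1" unfolding z_def by (simp add: power_abs)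
  from ft_feasibleD[OF feas Tsub cT injx zb] obtain d1 d2 W1 b1 W2 b2 W3 b3 where
    dd: "d1 + d2 = m" and
    fitT: "\<forall>i\<in>T. net3 d1 d2 W1 b1 W2 b2 W3 b3 (x i) = z i" and
    fit0: "\<forall>i\<in>{1..K} - T. net3 d1 d2 W1 b1 W2 b2 W3 b3 (x i) = 0"
    by blast
  define G where "G = G1 d1 d2 (\<lambda>j. W1 j \<bullet> one) b1 W2 b2 W3 b3"
  have val: "G (real i) = (if i \<in> T then (-1)^i else 0)" if "i \<in> {1..K}" for i
  proof -
    have "G (real i) = net3 d1 d2 W1 b1 W2 b2 W3 b3 (x i)"
      unfolding G_def x_def one_def by (simp add: net3_line)
    then show ?thesis using fitT fit0 that unfolding z_def by auto
  qed
  have "3 \<in> T0" unfolding T0_def using C3 by auto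
  then have g3: "G 3 = -1" using val[of 3] T0T K3 by auto
  have g2: "G 2 \<ge> 0" using val[of 2] K3 by auto
  from H[OF dd] consider "d1 = 0 \<or> d2 = 0" | "d1 = 1 \<and> d2 = 1 \<and> 4 \<le> K"
    | "d1 + d2 * (d1 + 1) + 2 < min K (3 * N + 2)" by blast
  then show False
  proof cases
    case 1
    then have "G 2 = G 3" unfolding G_def by (rule G1_const)
    then show False using g2 g3 by simp
  next
    case 2
    then have h: "d1 = 1 \<and> d2 = 1 \<and> 4 \<le> K" .
    have g4: "G 4 \<ge> 0" using val[of 4] h by auto
    show False using mono11[of "\<lambda>j. W1 j \<bullet> one" b1 W2 b2 W3 b3] g2 g3 g4 h unfolding G_def by auto
  next
    case 3
    then have bnd: "d1 + d2 * (d1 + 1) + 2 < min K (3 * N + 2)" .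
    obtain B where B: "finite B" "card B \<le> d1 + d2 * (d1 + 1)"
      "\<And>u v. u < v \<Longrightarrow> B \<inter> {u<..<v} = {} \<Longrightarrow> aff G u v"
      using bp_exists[of d1 d2 "\<lambda>j. W1 j \<bullet> one" b1 W2 b2 W3 b3] unfolding G_def by blast
    define p :: "nat \<Rightarrow> real" where "p i = real (i + 1)" for i
    define d :: "nat \<Rightarrow> real" where "d i = (-1)^i" for i
    define s where "s i = (i + 1 \<in> T \<or> i + 2 \<in> T)" for i
    have "C - 1 - 1 \<le> card B"
    proof (rule chain[where B=B and G=G and r="C - 1" and p=p and d=d and s=s])
      show "finite B" by fact
      show "\<And>u v. u < v \<Longrightarrow> B \<inter> {u<..<v} = {} \<Longrightarrow> aff G u v" by fact
      show "\<And>i. i < C - 1 \<Longrightarrow> p i < p (Suc i)" unfolding p_def by simp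
    next
      fix i assume i: "i < C - 1"
      have v1: "G (p i) = (if i + 1 \<in> T then (-1)^(i+1) else 0)" unfolding p_def
        using val[of "i+1"] i C3 by simp
      have v2: "G (p (Suc i)) = (if i + 2 \<in> T then (-1)^(i+2) else 0)" unfolding p_def
        using val[of "i+2"] i C3 by simp
      have sq: "(-1::real)^i * (-1)^i = 1" by (rule sgn_pow)
      show "if s i then d i * (G (p (Suc i)) - G (p i)) > 0 else d i * (G (p (Suc i)) - G (p i)) \<ge> 0"
        unfolding s_def d_def v1 v2 using sq by (auto simp: algebra_simps)
    next
      fix i assume i: "Suc i < C - 1"
      have "d (Suc i) = - d i" unfolding d_def by simp
      moreover have "s i \<or> s (Suc i)"
      proof -
        have "i + 3 \<le> C" using i by simp
        have "3 dvd (i + 1) \<or> 3 dvd (i + 2) \<or> 3 dvd (i + 3)" by presburger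
        then have "i + 1 \<in> T0 \<or> i + 2 \<in> T0 \<or> i + 3 \<in> T0" unfolding T0_def using \<open>i + 3 \<le> C\<close> by auto
        then show ?thesis unfolding s_def using T0T by (auto simp: numeral_eq_Suc)
      qed
      ultimately show "d (Suc i) = - d i \<and> (s i \<or> s (Suc i))" by simp
    qed
    then show False using B(2) bnd unfolding C_def by linarith
  qed
qed

definition blk :: "nat \<Rightarrow> (nat \<Rightarrow> nat) \<Rightarrow> nat \<Rightarrow> nat" where
  "blk L f s = Max {b. b < L \<and> f b \<le> s}"

lemma blk_props:
  assumes "L \<ge> 1" "f 0 = 0"
  shows "blk L f s < L" "f (blk L f s) \<le> s"
proof -
  have fin: "finite {b. b < L \<and> f b \<le> s}" by simp
  have ne: "0 \<in> {b. b < L \<and> f b \<le> s}" using assms by simp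
  have "blk L f s \<in> {b. b < L \<and> f b \<le> s}" unfolding blk_def using fin ne by (intro Max_in) auto
  then show "blk L f s < L" "f (blk L f s) \<le> s" by auto
qed

lemma blk_ge: "b < L \<Longrightarrow> f b \<le> s \<Longrightarrow> b \<le> blk L f s"
  unfolding blk_def by (intro Max_ge) auto

lemma blk_iff:
  assumes "L \<ge> 1" "f 0 = 0" "strict_mono f" "b < L"
  shows "f b \<le> s \<longleftrightarrow> b \<le> blk L f s"
proof
  assume "f b \<le> s" then show "b \<le> blk L f s" using blk_ge assms by blast
next
  assume "b \<le> blk L f s"
  then have "f b \<le> f (blk L f s)" using assms(3) by (simp add: strict_mono_less_eq)
  then show "f b \<le> s" using blk_props[where L=L and f=f and s=s, OF assms(1,2)] by simp
qed

lemma sum_pairs: "(\<Sum>k<2*P. F k) = (\<Sum>i<P. F (2*i) + F (2*i+1))" for P :: nat and F :: "nat \<Rightarrow> 'a::comm_monoid_add"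
  by (induction P) (simp_all add: algebra_simps)

lemma sum_first_layer: "L \<ge> 1 \<Longrightarrow> (\<Sum>j<2*L-1. F j) = F 0 + (\<Sum>i<L-1. F (2*i+1) + F (2*i+2))" for L :: nat and F :: "nat \<Rightarrow> 'a::comm_monoid_add"
proof (induction L)
  case 0 then show ?case by simp
next
  case (Suc L)
  show ?case
  proof (cases "L = 0")
    case True then show ?thesis by simp
  next
    case False
    have e1: "2 * Suc L - 1 = Suc (Suc (2 * L - 1))" "Suc (2 * L - 1) = 2 * L" using False by simp_all
    have "(\<Sum>j<2 * Suc L - 1. F j) = (\<Sum>j<Suc (Suc (2 * L - 1)). F j)" using e1 by simp
    also have "\<dots> = (\<Sum>j<2*L-1. F j) + F (2*L-1) + F (Suc (2*L-1))" by (simp only: sum.lessThan_Suc)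
    finally have "(\<Sum>j<2 * Suc L - 1. F j) = (\<Sum>j<2*L-1. F j) + F (2*L-1) + F (2*L)" using e1 by simp
    also have "\<dots> = F 0 + (\<Sum>i<L-1. F (2*i+1) + F (2*i+2)) + F (2*(L-1)+1) + F (2*(L-1)+2)"
    proof -
      have e2: "2*(L-1)+1 = 2*L-1" "2*(L-1)+2 = 2*L" using False by auto
      show ?thesis unfolding e2 using Suc False by simp
    qed
    also have "\<dots> = F 0 + (\<Sum>i<Suc L-1. F (2*i+1) + F (2*i+2))"
      using False by (cases L) (simp_all add: algebra_simps)
    finally show ?thesis .
  qed
qed

lemma gap_mono:
  fixes q :: "nat \<Rightarrow> real"
  assumes "\<And>s. q s + g \<le> q (Suc s)" "g > 0" "s < r"
  shows "q s + g \<le> q r"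
  using assms(3)
proof (induction r)
  case 0 then show ?case by simp
next
  case (Suc r)
  show ?case
  proof (cases "s = r")
    case True then show ?thesis using assms(1) by simp
  next
    case False
    then have "q s + g \<le> q r" using Suc by simp
    also have "q r \<le> q (Suc r)" using assms(1)[of r] assms(2) by simp
    finally show ?thesis .
  qed
qed

lemma gap_le:
  fixes q :: "nat \<Rightarrow> real"
  assumes "\<And>s. q s + g \<le> q (Suc s)" "g > 0" "s \<le> r"
  shows "q s \<le> q r"
  using gap_mono[where q=q and g=g and s=s and r=r, OF assms(1,2)] assms by (cases "s = r") auto

lemma step_relu:
  fixes g D lam t qr :: real
  assumes g: "g > 0" and lam: "lam = 8 / g" and D: "\<bar>D\<bar> \<le> 2"
    and c: "(t \<ge> qr) \<or> (t \<le> qr - g)"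
  shows "lam * relu (1 * t + - (qr - g/2)) - lam * relu (1 * t + (- (qr - g/2) - D / lam))
         = (if t \<ge> qr then D else 0)"
proof -
  have lpos: "lam > 0" using g lam by simp
  have Dl: "D / lam = D * g / 8" unfolding lam using g by (simp add: field_simps)
  have Db: "\<bar>D / lam\<bar> \<le> g / 4"
  proof -
    have "\<bar>D / lam\<bar> = \<bar>D * g / 8\<bar>" by (simp only: Dl)
    also have "\<dots> = \<bar>D\<bar> * g / 8" using g by (simp add: abs_mult)
    finally have "\<bar>D / lam\<bar> = \<bar>D\<bar> * g / 8" .
    also have "\<dots> \<le> 2 * g / 8" using D g by (intro divide_right_mono mult_right_mono) auto
    finally show ?thesis by simp
  qed
  show ?thesis
  proof (cases "t \<ge> qr")
    case True
    have a1: "1 * t + - (qr - g/2) \<ge> 0" using True g by simp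
    have a2: "1 * t + (- (qr - g/2) - D / lam) \<ge> 0" using True g abs_le_D1[OF Db] by linarith
    have "lam * relu (1 * t + - (qr - g/2)) - lam * relu (1 * t + (- (qr - g/2) - D / lam))
        = lam * (1 * t + - (qr - g/2)) - lam * (1 * t + (- (qr - g/2) - D / lam))"
      using a1 a2 unfolding relu_def by simp
    also have "\<dots> = lam * (D / lam)" by (simp add: algebra_simps)
    also have "\<dots> = D" using lpos by simp
    finally show ?thesis using True by simp
  next
    case False
    then have t: "t \<le> qr - g" using c by simp
    have a1: "1 * t + - (qr - g/2) \<le> 0" using t g by simp
    have a2: "1 * t + (- (qr - g/2) - D / lam) \<le> 0" using t g abs_le_D2[OF Db] by linarith
    show ?thesis using a1 a2 False unfolding relu_def by simp
  qed
qed

lemma sum_trunc: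
  fixes F :: "nat \<Rightarrow> 'a::comm_monoid_add"
  assumes "n \<le> m" "\<And>j. n \<le> j \<Longrightarrow> F j = 0"
  shows "(\<Sum>j<m. F j) = (\<Sum>j<n. F j)"
proof -
  have "(\<Sum>j<m. F j) = (\<Sum>j\<in>{..<n}. F j)"
    by (rule sum.mono_neutral_right) (use assms in auto)
  then show ?thesis by simp
qed

lemma first_layer:
  fixes q :: "nat \<Rightarrow> real"
  assumes gap: "\<And>s. q s + g \<le> q (Suc s)" and g: "g > 0" and f: "strict_mono f" "f 0 = 0"
    and L: "L \<ge> 1" and d1: "2*L - 1 \<le> d1"
  shows "\<exists>al e. \<forall>(a::nat \<Rightarrow> real) (c::nat \<Rightarrow> real). \<exists>W b. \<forall>s.
           (\<Sum>j<d1. W j * relu (al j * q s + e j)) + b = a (blk L f s) * q s + c (blk L f s)"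
proof -
  define be where "be = q 0 - 1"
  define ga where "ga b = q (f b) - 2*g/3" for b
  define ga' where "ga' b = q (f b) - g/3" for b
  define al :: "nat \<Rightarrow> real" where "al j = (if j < 2*L-1 then 1 else 0)" for j
  define e where "e j = (if j = 0 then - be else if j < 2*L-1 then
      (if odd j then - ga (Suc ((j-1) div 2)) else - ga' (Suc ((j-1) div 2))) else 0)" for j
  have relu_ga: "relu (q s - ga b) = (if f b \<le> s then q s - ga b else 0)" for s b
  proof (cases "f b \<le> s")
    case True
    then have "q (f b) \<le> q s" using gap_le[where q=q and g=g, OF gap g] by blast
    then show ?thesis using True g unfolding relu_def ga_def by simp
  next
    case False
    then have "q s + g \<le> q (f b)" using gap_mono[where q=q and g=g, OF gap g] by simp
    then show ?thesis using False g unfolding relu_def ga_def by simp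
  qed
  have relu_ga': "relu (q s - ga' b) = (if f b \<le> s then q s - ga' b else 0)" for s b
  proof (cases "f b \<le> s")
    case True
    then have "q (f b) \<le> q s" using gap_le[where q=q and g=g, OF gap g] by blast
    then show ?thesis using True g unfolding relu_def ga'_def by simp
  next
    case False
    then have "q s + g \<le> q (f b)" using gap_mono[where q=q and g=g, OF gap g] by simp
    then show ?thesis using False g unfolding relu_def ga'_def by simp
  qed
  have relu_be: "relu (q s - be) = q s - be" for s
  proof -
    have "q 0 \<le> q s" using gap_le[where q=q and g=g, OF gap g] by simp
    then show ?thesis unfolding relu_def be_def by simp
  qed
  have "\<exists>W b. \<forall>s. (\<Sum>j<d1. W j * relu (al j * q s + e j)) + b = a (blk L f s) * q s + c (blk L f s)"
    for a c :: "nat \<Rightarrow> real"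
  proof -
    define Da where "Da b = a b - a (b-1)" for b
    define Dc where "Dc b = c b - c (b-1)" for b
    define W' where "W' b = - (Dc b + ga b * Da b) / (ga' b - ga b)" for b
    define Wg where "Wg b = Da b - W' b" for b
    define W where "W j = (if j = 0 then a 0 else if j < 2*L-1 then
      (if odd j then Wg (Suc ((j-1) div 2)) else W' (Suc ((j-1) div 2))) else 0)" for j
    define bb where "bb = c 0 + a 0 * be"
    have key: "Wg b * (t - ga b) + W' b * (t - ga' b) = Da b * t + Dc b" for b t
    proof -
      have ne: "ga' b - ga b = g / 3" unfolding ga_def ga'_def by simp
      have "W' b * (ga' b - ga b) = - (Dc b + ga b * Da b)" unfolding W'_def using ne g by simp
      then show ?thesis unfolding Wg_def by (simp add: algebra_simps)
    qed
    have "(\<Sum>j<d1. W j * relu (al j * q s + e j)) + bb = a (blk L f s) * q s + c (blk L f s)" for s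
    proof -
      define F where "F j = W j * relu (al j * q s + e j)" for j
      have "(\<Sum>j<d1. F j) = (\<Sum>j<2*L-1. F j)"
        by (rule sum_trunc[OF d1]) (use L in \<open>simp add: F_def W_def\<close>)
      also have "\<dots> = F 0 + (\<Sum>i<L-1. F (2*i+1) + F (2*i+2))" by (rule sum_first_layer[OF L])
      also have "F 0 = a 0 * (q s - be)"
        unfolding F_def W_def al_def e_def using L relu_be[of s] by simp
      also have "(\<Sum>i<L-1. F (2*i+1) + F (2*i+2)) =
          (\<Sum>i<L-1. if i < blk L f s then (a (Suc i) * q s + c (Suc i)) - (a i * q s + c i) else 0)"
      proof (rule sum.cong[OF refl])
        fix i assume i: "i \<in> {..<L-1}"
        have i1: "2*i+1 < 2*L-1" "2*i+2 < 2*L-1" using i by auto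
        have F1: "F (2*i+1) = Wg (Suc i) * relu (q s - ga (Suc i))"
          unfolding F_def W_def al_def e_def using i1 by simp
        have F2: "F (2*i+2) = W' (Suc i) * relu (q s - ga' (Suc i))"
        proof -
          have "odd (2*i+2) = False" by simp
          moreover have "(2*i+2-1) div 2 = i" by simp
          ultimately show ?thesis unfolding F_def W_def al_def e_def using i1 by simp
        qed
        have iff: "f (Suc i) \<le> s \<longleftrightarrow> i < blk L f s"
          using blk_iff[OF L f(2) f(1), of "Suc i" s] i by auto
        show "F (2*i+1) + F (2*i+2) =
          (if i < blk L f s then (a (Suc i) * q s + c (Suc i)) - (a i * q s + c i) else 0)"
        proof (cases "i < blk L f s")
          case True
          then have "f (Suc i) \<le> s" using iff by simp
          then have "F (2*i+1) + F (2*i+2) = Wg (Suc i) * (q s - ga (Suc i)) + W' (Suc i) * (q s - ga' (Suc i))"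
            unfolding F1 F2 relu_ga relu_ga' by simp
          also have "\<dots> = Da (Suc i) * q s + Dc (Suc i)" by (rule key)
          finally show ?thesis using True unfolding Da_def Dc_def by (simp add: algebra_simps)
        next
          case False
          then have "\<not> f (Suc i) \<le> s" using iff by simp
          then show ?thesis unfolding F1 F2 relu_ga relu_ga' using False by simp
        qed
      qed
      also have "\<dots> = (\<Sum>i<blk L f s. (a (Suc i) * q s + c (Suc i)) - (a i * q s + c i))"
      proof -
        have bl: "blk L f s \<le> L - 1" using blk_props[where L=L and f=f and s=s, OF L f(2)] by simp
        have "(\<Sum>i<L-1. if i < blk L f s then (a (Suc i) * q s + c (Suc i)) - (a i * q s + c i) else 0)
            = (\<Sum>i<blk L f s. if i < blk L f s then (a (Suc i) * q s + c (Suc i)) - (a i * q s + c i) else 0)"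
          by (rule sum_trunc[OF bl]) simp
        also have "\<dots> = (\<Sum>i<blk L f s. (a (Suc i) * q s + c (Suc i)) - (a i * q s + c i))"
          by (rule sum.cong) auto
        finally show ?thesis by simp
      qed
      also have "\<dots> = (a (blk L f s) * q s + c (blk L f s)) - (a 0 * q s + c 0)"
        by (rule sum_lessThan_telescope[where f = "\<lambda>i. a i * q s + c i"])
      finally have "(\<Sum>j<d1. F j) = a 0 * (q s - be) + ((a (blk L f s) * q s + c (blk L f s)) - (a 0 * q s + c 0))" .
      then show ?thesis unfolding F_def bb_def by (simp add: algebra_simps)
    qed
    then show ?thesis by blast
  qed
  then show ?thesis by blast
qed

lemma blk_mono:
  assumes "L \<ge> 1" "f 0 = 0" "s \<le> s'"
  shows "blk L f s \<le> blk L f s'"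
  using blk_props[where L=L and f=f and s=s, OF assms(1,2)] assms(3) by (intro blk_ge) auto

lemma telescope_block:
  fixes y :: "nat \<Rightarrow> real"
  assumes L: "L \<ge> 1" and f: "strict_mono f" "f 0 = 0"
  shows "f b \<le> s \<Longrightarrow> blk L f s = b \<Longrightarrow>
    (\<Sum>r\<in>{f b..s}. y r - (if r = f (blk L f r) then 0 else y (r - 1))) = y s"
proof (induction s)
  case 0
  then show ?case by simp
next
  case (Suc s)
  show ?case
  proof (cases "f b = Suc s")
    case True
    then show ?thesis using Suc.prems by simp
  next
    case False
    then have fbs: "f b \<le> s" using Suc.prems by simp
    have "b < L" using blk_props[where L=L and f=f and s="Suc s", OF L f(2)] Suc.prems by simp
    then have "b \<le> blk L f s" using blk_ge fbs by blast
    moreover have "blk L f s \<le> b" using blk_mono[where L=L and f=f, OF L f(2), of s "Suc s"] Suc.prems by simp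
    ultimately have bs: "blk L f s = b" by simp
    have "(\<Sum>r\<in>{f b..Suc s}. y r - (if r = f (blk L f r) then 0 else y (r - 1)))
        = (\<Sum>r\<in>{f b..s}. y r - (if r = f (blk L f r) then 0 else y (r - 1)))
          + (y (Suc s) - (if Suc s = f (blk L f (Suc s)) then 0 else y s))"
      using fbs by (simp add: sum.cl_ivl_Suc)
    also have "\<dots> = y s + (y (Suc s) - y s)"
      using Suc.IH[OF fbs bs] Suc.prems False by simp
    finally show ?thesis by simp
  qed
qed

lemma core:
  fixes q y :: "nat \<Rightarrow> real"
  assumes gap: "\<And>s. q s + g \<le> q (Suc s)" and g: "g > 0" and f: "strict_mono f" "f 0 = 0"
    and L: "L \<ge> 1" and d1: "2*L - 1 \<le> d1" and d2: "2*P \<le> d2"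
    and yb: "\<And>s. s < K \<Longrightarrow> \<bar>y s\<bar> \<le> 1"
    and St: "\<And>b. b < L \<Longrightarrow> card {r. r < K \<and> blk L f r = b \<and>
                 y r - (if r = f (blk L f r) then 0 else y (r - 1)) \<noteq> 0} \<le> P"
  shows "\<exists>al e W2 b2 W3 b3. \<forall>s<K. G1 d1 d2 al e W2 b2 W3 b3 (q s) = y s"
proof -
  obtain al e where FL: "\<forall>(a::nat \<Rightarrow> real) (c::nat \<Rightarrow> real). \<exists>W b. \<forall>s.
           (\<Sum>j<d1. W j * relu (al j * q s + e j)) + b = a (blk L f s) * q s + c (blk L f s)"
    using first_layer[where q=q and g=g and f=f and L=L, OF gap g f L d1] by blast
  define lam where "lam = 8 / g"
  define Dl where "Dl r = y r - (if r = f (blk L f r) then 0 else y (r - 1))" for r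
  define St where "St b = {r. r < K \<and> blk L f r = b \<and> Dl r \<noteq> 0}" for b
  have finSt: "finite (St b)" for b unfolding St_def by simp
  have cSt: "card (St b) \<le> P" if "b < L" for b using St[OF that] unfolding St_def Dl_def by simp
  have Dlb: "\<bar>Dl r\<bar> \<le> 2" if "r < K" for r
  proof -
    have "\<bar>y r\<bar> \<le> 1" using yb that by simp
    moreover have "\<bar>(if r = f (blk L f r) then 0 else y (r - 1))\<bar> \<le> 1" using yb that by auto
    ultimately show ?thesis unfolding Dl_def by linarith
  qed
  have "\<forall>b. \<exists>h. bij_betw h {0..<card (St b)} (St b)" using ex_bij_betw_nat_finite finSt by blast
  then obtain en where en: "\<And>b. bij_betw (en b) {0..<card (St b)} (St b)" by metis
  define aa where "aa k b = (if k < 2*P \<and> k div 2 < card (St b) then 1 else (0::real))" for k b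
  define cc where "cc k b = (if k < 2*P \<and> k div 2 < card (St b) then
       - (q (en b (k div 2)) - g/2) - (if odd k then Dl (en b (k div 2)) / lam else 0) else -1)" for k b
  have "\<forall>k. \<exists>Wb :: (nat \<Rightarrow> real) \<times> real. \<forall>s.
     (\<Sum>j<d1. fst Wb j * relu (al j * q s + e j)) + snd Wb = aa k (blk L f s) * q s + cc k (blk L f s)"
  proof
    fix k
    from FL obtain W b where "\<forall>s. (\<Sum>j<d1. W j * relu (al j * q s + e j)) + b = aa k (blk L f s) * q s + cc k (blk L f s)"
      by blast
    then show "\<exists>Wb :: (nat \<Rightarrow> real) \<times> real. \<forall>s.
     (\<Sum>j<d1. fst Wb j * relu (al j * q s + e j)) + snd Wb = aa k (blk L f s) * q s + cc k (blk L f s)"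
      by (intro exI[of _ "(W, b)"]) simp
  qed
  from choice[OF this] obtain WB where WB: "\<And>k s.
     (\<Sum>j<d1. fst (WB k) j * relu (al j * q s + e j)) + snd (WB k) = aa k (blk L f s) * q s + cc k (blk L f s)"
    by blast
  define W2 where "W2 k j = fst (WB k) j" for k j
  define b2 where "b2 k = snd (WB k)" for k
  define W3 where "W3 k = (if k < 2*P then (if even k then lam else - lam) else 0)" for k
  have "G1 d1 d2 al e W2 b2 W3 0 (q s) = y s" if s: "s < K" for s
  proof -
    define b where "b = blk L f s"
    have bL: "b < L" and fbs: "f b \<le> s" using blk_props[where L=L and f=f and s=s, OF L f(2)] unfolding b_def by auto
    define n where "n = card (St b)"
    have nP: "n \<le> P" unfolding n_def using cSt[OF bL] .
    define R where "R k = W3 k * relu (aa k b * q s + cc k b)" for k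
    have "G1 d1 d2 al e W2 b2 W3 0 (q s) = (\<Sum>k<d2. R k)"
      unfolding G1_def R_def W2_def b2_def WB b_def by simp
    also have "\<dots> = (\<Sum>k<2*P. R k)" by (rule sum_trunc[OF d2]) (simp add: R_def W3_def)
    also have "\<dots> = (\<Sum>i<P. R (2*i) + R (2*i+1))" by (rule sum_pairs)
    also have "\<dots> = (\<Sum>i<P. if i < n then (if en b i \<le> s then Dl (en b i) else 0) else 0)"
    proof (rule sum.cong[OF refl])
      fix i assume i: "i \<in> {..<P}"
      have k1: "2*i < 2*P" "2*i+1 < 2*P" "(2*i) div 2 = i" "(2*i+1) div 2 = i" using i by auto
      show "R (2*i) + R (2*i+1) = (if i < n then (if en b i \<le> s then Dl (en b i) else 0) else 0)"
      proof (cases "i < n")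
        case True
        define r where "r = en b i"
        have rSt: "r \<in> St b" unfolding r_def using en[of b] True unfolding n_def bij_betw_def by auto
        then have rK: "r < K" unfolding St_def by simp
        have eq1: "R (2*i) = lam * relu (1 * q s + - (q r - g/2))"
          unfolding R_def W3_def aa_def cc_def using k1 True unfolding n_def r_def by simp
        have eq2: "R (2*i+1) = - (lam * relu (1 * q s + (- (q r - g/2) - Dl r / lam)))"
          unfolding R_def W3_def aa_def cc_def using k1 True unfolding n_def r_def by simp
        have c: "q s \<ge> q r \<or> q s \<le> q r - g"
        proof (cases "r \<le> s")
          case True then show ?thesis using gap_le[where q=q and g=g, OF gap g] by blast
        next
          case False then have "q s + g \<le> q r" using gap_mono[where q=q and g=g, OF gap g] by simp
          then show ?thesis by simp
        qed
        have iff: "q s \<ge> q r \<longleftrightarrow> r \<le> s"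
        proof
          assume "q r \<le> q s"
          show "r \<le> s"
          proof (rule ccontr)
            assume "\<not> r \<le> s"
            then have "q s + g \<le> q r" using gap_mono[where q=q and g=g, OF gap g] by simp
            then show False using \<open>q r \<le> q s\<close> g by simp
          qed
        qed (use gap_le[where q=q and g=g, OF gap g] in blast)
        have "R (2*i) + R (2*i+1) = (if q s \<ge> q r then Dl r else 0)"
          using step_relu[OF g lam_def Dlb[OF rK] c] eq1 eq2 by simp
        then show ?thesis using True iff unfolding r_def by simp
      next
        case False
        then show ?thesis unfolding R_def W3_def aa_def cc_def n_def using k1 by (simp add: relu_def)
      qed
    qed
    also have "\<dots> = (\<Sum>i<n. if i < n then (if en b i \<le> s then Dl (en b i) else 0) else 0)"
      by (rule sum_trunc[OF nP]) simp
    also have "\<dots> = (\<Sum>i\<in>{0..<n}. (if en b i \<le> s then Dl (en b i) else 0))"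
      by (rule sum.cong) auto
    also have "\<dots> = (\<Sum>r\<in>St b. (if r \<le> s then Dl r else 0))"
      unfolding n_def by (rule sum.reindex_bij_betw[OF en])
    also have "\<dots> = (\<Sum>r\<in>{r\<in>St b. r \<le> s}. Dl r)"
      using finSt by (simp add: sum.inter_filter)
    also have "{r\<in>St b. r \<le> s} = {r\<in>{f b..s}. Dl r \<noteq> 0}"
    proof (rule set_eqI, rule iffI)
      fix r assume "r \<in> {r\<in>St b. r \<le> s}"
      then have r: "r < K" "blk L f r = b" "Dl r \<noteq> 0" "r \<le> s" unfolding St_def by auto
      have "f (blk L f r) \<le> r" using blk_props[where L=L and f=f and s=r, OF L f(2)] by simp
      then show "r \<in> {r\<in>{f b..s}. Dl r \<noteq> 0}" using r by auto
    next
      fix r assume "r \<in> {r\<in>{f b..s}. Dl r \<noteq> 0}"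
      then have r: "f b \<le> r" "r \<le> s" "Dl r \<noteq> 0" by auto
      have "b \<le> blk L f r" using blk_ge[where b=b and L=L and f=f and s=r, OF bL r(1)] .
      moreover have "blk L f r \<le> b" using blk_mono[where L=L and f=f, OF L f(2) r(2)] unfolding b_def .
      ultimately have "blk L f r = b" by simp
      then show "r \<in> {r\<in>St b. r \<le> s}" unfolding St_def using r s by auto
    qed
    also have "(\<Sum>r\<in>{r\<in>{f b..s}. Dl r \<noteq> 0}. Dl r) = (\<Sum>r\<in>{f b..s}. Dl r)"
      by (rule sum.mono_neutral_left) auto
    also have "\<dots> = y s"
    proof -
      have bs: "blk L f s = b" unfolding b_def ..
      from telescope_block[where L=L and f=f and b=b and s=s and y=y, OF L f fbs bs]
      show ?thesis unfolding Dl_def .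
    qed
    finally show ?thesis .
  qed
  then show ?thesis by blast
qed

lemma dir_exists:
  fixes x :: "nat \<Rightarrow> real^'n::finite"
  assumes inj: "inj_on x S" and fin: "finite S"
  shows "\<exists>w. inj_on (\<lambda>i. w \<bullet> x i) S"
proof -
  define PS where "PS = {p. fst p \<in> S \<and> snd p \<in> S \<and> fst p \<noteq> snd p}"
  define Bad where "Bad = \<Union> ((\<lambda>p. {w. (x (fst p) - x (snd p)) \<bullet> w = 0}) ` PS)"
  have finPS: "finite PS"
  proof -
    have "PS \<subseteq> S \<times> S" unfolding PS_def by auto
    then show ?thesis using fin finite_subset by blast
  qed
  have "negligible Bad" unfolding Bad_def
  proof (rule negligible_Union)
    show "finite ((\<lambda>p. {w. (x (fst p) - x (snd p)) \<bullet> w = 0}) ` PS)" using finPS by simp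
  next
    fix T assume "T \<in> (\<lambda>p. {w. (x (fst p) - x (snd p)) \<bullet> w = 0}) ` PS"
    then obtain p where p: "p \<in> PS" "T = {w. (x (fst p) - x (snd p)) \<bullet> w = 0}" by blast
    have "x (fst p) \<noteq> x (snd p)" using p(1) inj unfolding PS_def inj_on_def by blast
    then have "x (fst p) - x (snd p) \<noteq> 0" by simp
    then show "negligible T" unfolding p(2) by (intro negligible_hyperplane) simp
  qed
  then have "Bad \<noteq> UNIV" using non_negligible_UNIV by metis
  then obtain w where w: "w \<notin> Bad" by blast
  have "inj_on (\<lambda>i. w \<bullet> x i) S"
  proof (rule inj_onI, rule ccontr)
    fix i j assume ij: "i \<in> S" "j \<in> S" "w \<bullet> x i = w \<bullet> x j" "i \<noteq> j"
    have "(i, j) \<in> PS" unfolding PS_def using ij by simp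
    moreover have "(x i - x j) \<bullet> w = 0" using ij(3) by (simp add: inner_commute[of _ w] inner_diff_right)
    ultimately have "w \<in> Bad" unfolding Bad_def by force
    then show False using w by simp
  qed
  then show ?thesis by blast
qed

lemma sort_exists:
  fixes t :: "nat \<Rightarrow> real"
  assumes inj: "inj_on t {1..K}"
  shows "\<exists>\<sigma>. bij_betw \<sigma> {..<K} {1..K} \<and> (\<forall>r r'. r < r' \<longrightarrow> r' < K \<longrightarrow> t (\<sigma> r) < t (\<sigma> r'))"
proof -
  define xs where "xs = sorted_list_of_set (t ` {1..K})"
  have fin: "finite (t ` {1..K})" by simp
  have setxs: "set xs = t ` {1..K}" unfolding xs_def using fin by simp
  have srt: "sorted_wrt (<) xs" unfolding xs_def by (rule strict_sorted_list_of_set)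
  have dist: "distinct xs" unfolding xs_def by simp
  have len: "length xs = K"
  proof -
    have "length xs = card (t ` {1..K})" unfolding xs_def by simp
    also have "\<dots> = K" using card_image[OF inj] by simp
    finally show ?thesis .
  qed
  define \<sigma> where "\<sigma> r = inv_into {1..K} t (xs ! r)" for r
  have inset: "xs ! r \<in> t ` {1..K}" if "r < K" for r using setxs len that nth_mem by metis
  have ts: "t (\<sigma> r) = xs ! r" if "r < K" for r unfolding \<sigma>_def using inset[OF that] by (rule f_inv_into_f)
  have sK: "\<sigma> r \<in> {1..K}" if "r < K" for r unfolding \<sigma>_def using inset[OF that] by (rule inv_into_into)
  have injs: "inj_on \<sigma> {..<K}"
  proof (rule inj_onI)
    fix r r' assume "r \<in> {..<K}" "r' \<in> {..<K}" "\<sigma> r = \<sigma> r'"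
    then have "xs ! r = xs ! r'" using ts by (metis lessThan_iff)
    then show "r = r'" using dist len \<open>r \<in> {..<K}\<close> \<open>r' \<in> {..<K}\<close> by (simp add: nth_eq_iff_index_eq)
  qed
  have img: "\<sigma> ` {..<K} = {1..K}"
  proof (rule card_subset_eq)
    show "finite {1..K}" by simp
    show "\<sigma> ` {..<K} \<subseteq> {1..K}" using sK by auto
    show "card (\<sigma> ` {..<K}) = card {1..K}" using card_image[OF injs] by simp
  qed
  have "bij_betw \<sigma> {..<K} {1..K}" unfolding bij_betw_def using injs img by simp
  moreover have "\<forall>r r'. r < r' \<longrightarrow> r' < K \<longrightarrow> t (\<sigma> r) < t (\<sigma> r')"
    using ts srt len sorted_wrt_nth_less[of "(<)" xs] by auto
  ultimately show ?thesis by blast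
qed

lemma feas_core:
  fixes K N m d1 d2 L P :: nat
  assumes K1: "K \<ge> 1" and dm: "d1 + d2 = m" and L: "L \<ge> 1" "2*L - 1 \<le> d1" and P: "2*P \<le> d2"
   and BLK: "\<And>sp. sp \<subseteq> {..<K} \<Longrightarrow> card sp = N \<Longrightarrow> \<exists>f. strict_mono f \<and> f 0 = 0 \<and>
       (\<forall>y::nat\<Rightarrow>real. (\<forall>s. s \<notin> sp \<longrightarrow> y s = 0) \<longrightarrow>
          (\<forall>b<L. card {r. r < K \<and> blk L f r = b \<and> y r - (if r = f (blk L f r) then 0 else y (r - 1)) \<noteq> 0} \<le> P))"
  shows "ft_feasible m K N TYPE('n::finite)"
  unfolding ft_feasible_def
proof (intro allI impI)
  fix T :: "nat set" and x :: "nat \<Rightarrow> real^'n" and z :: "nat \<Rightarrow> real"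
  assume T: "T \<subseteq> {1..K}" and cT: "card T = N" and injx: "inj_on x {1..K}" and zb: "\<forall>i\<in>{1..K}. \<bar>z i\<bar> \<le> 1"
  obtain w where w: "inj_on (\<lambda>i. w \<bullet> x i) {1..K}" using dir_exists[OF injx] by auto
  define t where "t i = w \<bullet> x i" for i
  obtain \<sigma> where \<sigma>: "bij_betw \<sigma> {..<K} {1..K}" and ord: "\<And>r r'. r < r' \<Longrightarrow> r' < K \<Longrightarrow> t (\<sigma> r) < t (\<sigma> r')"
    using sort_exists[of t K] w unfolding t_def by blast
  define q where "q r = (if r < K then t (\<sigma> r) else t (\<sigma> (K-1)) + real (r - (K - 1)))" for r
  define g where "g = Min ((\<lambda>s. q (Suc s) - q s) ` {..<K})"
  have difpos: "q (Suc s) - q s > 0" if "s < K" for s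
  proof (cases "Suc s < K")
    case True then show ?thesis unfolding q_def using ord[of s "Suc s"] by simp
  next
    case False then have "s = K - 1" using that by simp
    then show ?thesis unfolding q_def using that K1 by simp
  qed
  have "0 \<in> {..<K}" using K1 by simp
  then have ne: "{..<K} \<noteq> {}" by blast
  have gpos: "g > 0" unfolding g_def using ne difpos by (subst Min_gr_iff) auto
  have gle: "g \<le> q (Suc s) - q s" if "s < K" for s unfolding g_def using that by (intro Min_le) auto
  have gap: "q s + g \<le> q (Suc s)" for s
  proof (cases "s < K")
    case True then show ?thesis using gle[OF True] by simp
  next
    case False
    have "g \<le> q (Suc (K-1)) - q (K-1)" using gle[of "K-1"] K1 by simp
    also have "\<dots> = 1" unfolding q_def using K1 by simp
    finally have "g \<le> 1" .
    moreover have "q (Suc s) - q s = 1" unfolding q_def using False K1 by simp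
    ultimately show ?thesis by simp
  qed
  define sp where "sp = {r. r < K \<and> \<sigma> r \<in> T}"
  have spK: "sp \<subseteq> {..<K}" unfolding sp_def by auto
  have injsp: "inj_on \<sigma> sp" using \<sigma> spK unfolding bij_betw_def by (auto intro: inj_on_subset)
  have "\<sigma> ` sp = T"
  proof
    show "\<sigma> ` sp \<subseteq> T" unfolding sp_def by auto
    show "T \<subseteq> \<sigma> ` sp"
    proof
      fix i assume i: "i \<in> T"
      then have "i \<in> \<sigma> ` {..<K}" using T \<sigma> unfolding bij_betw_def by auto
      then obtain r where "r < K" "\<sigma> r = i" by auto
      then show "i \<in> \<sigma> ` sp" unfolding sp_def using i by auto
    qed
  qed
  then have csp: "card sp = N" using card_image[OF injsp] cT by simp
  obtain f where f: "strict_mono f" "f 0 = 0" and fB: "\<forall>y::nat\<Rightarrow>real. (\<forall>s. s \<notin> sp \<longrightarrow> y s = 0) \<longrightarrow>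
          (\<forall>b<L. card {r. r < K \<and> blk L f r = b \<and> y r - (if r = f (blk L f r) then 0 else y (r - 1)) \<noteq> 0} \<le> P)"
    using BLK[OF spK csp] by blast
  define y where "y r = (if r < K \<and> \<sigma> r \<in> T then z (\<sigma> r) else 0)" for r
  have y0: "\<forall>s. s \<notin> sp \<longrightarrow> y s = 0" unfolding y_def sp_def by auto
  have yb: "\<bar>y s\<bar> \<le> 1" if "s < K" for s
  proof -
    have "\<sigma> s \<in> {1..K}" using \<sigma> that unfolding bij_betw_def by auto
    then show ?thesis unfolding y_def using zb by auto
  qed
  have StB: "\<And>b. b < L \<Longrightarrow> card {r. r < K \<and> blk L f r = b \<and>
                 y r - (if r = f (blk L f r) then 0 else y (r - 1)) \<noteq> 0} \<le> P"
    using fB y0 by blast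
  obtain al e W2 b2 W3 b3 where fit: "\<forall>s<K. G1 d1 d2 al e W2 b2 W3 b3 (q s) = y s"
    using core[where q=q and g=g and f=f and L=L and P=P and K=K and y=y, OF gap gpos f L P yb StB] by blast
  define W1 :: "nat \<Rightarrow> real^'n" where "W1 j = al j *\<^sub>R w" for j
  have netG: "net3 d1 d2 W1 e W2 b2 W3 b3 (x i) = G1 d1 d2 al e W2 b2 W3 b3 (t i)" for i
    unfolding net3_def G1_def W1_def t_def by (simp add: inner_scaleR_left)
  have val: "net3 d1 d2 W1 e W2 b2 W3 b3 (x i) = (if i \<in> T then z i else 0)" if i: "i \<in> {1..K}" for i
  proof -
    have "i \<in> \<sigma> ` {..<K}" using i \<sigma> unfolding bij_betw_def by auto
    then obtain r where r: "r < K" "\<sigma> r = i" by auto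
    have "t i = q r" unfolding q_def using r by simp
    then have "net3 d1 d2 W1 e W2 b2 W3 b3 (x i) = y r" using netG fit r by simp
    then show ?thesis unfolding y_def using r by simp
  qed
  show "\<exists>d1 d2 W1 b1 W2 b2 W3 b3. d1 + d2 = m \<and>
            (\<forall>i\<in>T. net3 d1 d2 W1 b1 W2 b2 W3 b3 (x i) = z i) \<and>
            (\<forall>i\<in>{1..K} - T. net3 d1 d2 W1 b1 W2 b2 W3 b3 (x i) = 0)"
    apply (rule exI[of _ d1], rule exI[of _ d2], rule exI[of _ W1], rule exI[of _ e],
           rule exI[of _ W2], rule exI[of _ b2], rule exI[of _ W3], rule exI[of _ b3])
    using dm val T by auto
qed

lemma blocks_mem:
  fixes K L P :: nat
  assumes P1: "P \<ge> 1" and KLP: "K \<le> L * P" and L: "L \<ge> 1"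
  shows "\<exists>f. strict_mono f \<and> f 0 = 0 \<and>
       (\<forall>y::nat\<Rightarrow>real. (\<forall>s. s \<notin> sp \<longrightarrow> y s = 0) \<longrightarrow>
          (\<forall>b<L. card {r. r < K \<and> blk L f r = b \<and> y r - (if r = f (blk L f r) then 0 else y (r - 1)) \<noteq> 0} \<le> P))"
proof -
  define f where "f b = b * P" for b
  have sm: "strict_mono f" unfolding f_def strict_mono_def using P1 by simp
  have f0: "f 0 = 0" unfolding f_def by simp
  have "card {r. r < K \<and> blk L f r = b \<and> y r - (if r = f (blk L f r) then 0 else y (r - 1)) \<noteq> 0} \<le> P"
    if b: "b < L" for b and y :: "nat \<Rightarrow> real"
  proof -
    have "{r. r < K \<and> blk L f r = b \<and> y r - (if r = f (blk L f r) then 0 else y (r - 1)) \<noteq> 0} \<subseteq> {b*P..<b*P+P}"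
    proof
      fix r assume r: "r \<in> {r. r < K \<and> blk L f r = b \<and> y r - (if r = f (blk L f r) then 0 else y (r - 1)) \<noteq> 0}"
      then have rK: "r < K" and rb: "blk L f r = b" by auto
      have "f b \<le> r" using blk_props[where L=L and f=f and s=r, OF L f0] rb by simp
      then have lo: "b * P \<le> r" unfolding f_def .
      have hi: "r < b * P + P"
      proof (cases "Suc b < L")
        case True
        show ?thesis
        proof (rule ccontr)
          assume "\<not> r < b * P + P"
          then have "f (Suc b) \<le> r" unfolding f_def by simp
          then have "Suc b \<le> blk L f r" using blk_ge[where b="Suc b" and L=L and f=f and s=r, OF True] by simp
          then show False using rb by simp
        qed
      next
        case False
        then have "L = Suc b" using b by simp
        then show ?thesis using rK KLP by (simp add: algebra_simps)
      qed
      show "r \<in> {b*P..<b*P+P}" using lo hi by simp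
    qed
    then have "card {r. r < K \<and> blk L f r = b \<and> y r - (if r = f (blk L f r) then 0 else y (r - 1)) \<noteq> 0}
        \<le> card {b*P..<b*P+P}" by (intro card_mono) auto
    then show ?thesis by simp
  qed
  then show ?thesis using sm f0 by blast
qed

lemma blocks_ft:
  fixes K L P gp N :: nat and sp :: "nat set"
  assumes gp1: "gp \<ge> 1" and gpP: "2 * gp \<le> P" and NL: "N \<le> L * gp" and L: "L \<ge> 1"
    and spK: "sp \<subseteq> {..<K}" and csp: "card sp = N"
  shows "\<exists>f. strict_mono f \<and> f 0 = 0 \<and>
       (\<forall>y::nat\<Rightarrow>real. (\<forall>s. s \<notin> sp \<longrightarrow> y s = 0) \<longrightarrow>
          (\<forall>b<L. card {r. r < K \<and> blk L f r = b \<and> y r - (if r = f (blk L f r) then 0 else y (r - 1)) \<noteq> 0} \<le> P))"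
proof -
  have finsp: "finite sp" using spK finite_subset by blast
  define spl where "spl = sorted_list_of_set sp"
  have setspl: "set spl = sp" unfolding spl_def using finsp by simp
  have lenspl: "length spl = N" unfolding spl_def using csp by simp
  have srt: "sorted_wrt (<) spl" unfolding spl_def by (rule strict_sorted_list_of_set)
  have lt: "spl ! i < spl ! j" if "i < j" "j < N" for i j using sorted_wrt_nth_less[OF srt that(1)] that lenspl by simp
  have le_imp: "i \<le> j" if "spl ! i \<le> spl ! j" "i < N" "j < N" for i j
  proof (rule ccontr)
    assume "\<not> i \<le> j"
    then have "spl ! j < spl ! i" using lt[of j i] that by simp
    then show False using that by simp
  qed
  have splK: "spl ! i < K" if "i < N" for i using that setspl lenspl spK nth_mem by fastforce
  define f where "f b = (if b = 0 then 0 else if b * gp < N then spl ! (b * gp) else K + b)" for b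
  have f0: "f 0 = 0" unfolding f_def by simp
  have fsuc: "f b < f (Suc b)" for b
  proof (cases "b = 0")
    case True
    show ?thesis
    proof (cases "gp < N")
      case True
      then have "spl ! 0 < spl ! gp" using lt[of 0 gp] gp1 by simp
      then show ?thesis unfolding f_def using \<open>b = 0\<close> True by simp
    next
      case False then show ?thesis unfolding f_def using \<open>b = 0\<close> by simp
    qed
  next
    case False
    show ?thesis
    proof (cases "Suc b * gp < N")
      case True
      have "b * gp < Suc b * gp" using gp1 by simp
      then have "spl ! (b * gp) < spl ! (Suc b * gp)" using lt True by blast
      then show ?thesis unfolding f_def using False True \<open>b * gp < Suc b * gp\<close> by simp
    next
      case c2: False
      show ?thesis
      proof (cases "b * gp < N")
        case True
        then have "spl ! (b * gp) < K" by (rule splK)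
        then show ?thesis unfolding f_def using False True c2 by simp
      next
        case False
        then show ?thesis unfolding f_def using \<open>b \<noteq> 0\<close> c2 by simp
      qed
    qed
  qed
  have sm: "strict_mono f" using fsuc by (simp add: strict_mono_Suc_iff)
  have cA: "card {r\<in>sp. blk L f r = b} \<le> gp" if b: "b < L" for b
  proof -
    have "{r\<in>sp. blk L f r = b} \<subseteq> (\<lambda>i. spl ! i) ` {b*gp..<Suc b*gp}"
    proof
      fix r assume r: "r \<in> {r\<in>sp. blk L f r = b}"
      then obtain i where i: "i < N" "spl ! i = r" using setspl lenspl by (auto simp: in_set_conv_nth)
      have rb: "blk L f r = b" using r by simp
      have rK: "r < K" using r spK by auto
      have fbr: "f b \<le> r" using blk_props[where L=L and f=f and s=r, OF L f0] rb by simp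
      have lo: "b * gp \<le> i"
      proof (cases "b = 0")
        case True then show ?thesis by simp
      next
        case False
        show ?thesis
        proof (cases "b * gp < N")
          case True
          then have "spl ! (b * gp) \<le> spl ! i" using fbr i False unfolding f_def by simp
          then show ?thesis using le_imp True i by blast
        next
          case c2: False
          then have "f b = K + b" unfolding f_def using False by simp
          then show ?thesis using fbr rK by simp
        qed
      qed
      have hi: "i < Suc b * gp"
      proof (cases "Suc b < L")
        case True
        have "r < f (Suc b)"
        proof (rule ccontr)
          assume "\<not> r < f (Suc b)"
          then have "Suc b \<le> blk L f r" using blk_ge[where b="Suc b" and L=L and f=f and s=r, OF True] by simp
          then show False using rb by simp
        qed
        show ?thesis
        proof (cases "Suc b * gp < N")
          case c3: True
          then have "spl ! i < spl ! (Suc b * gp)" using \<open>r < f (Suc b)\<close> i unfolding f_def by simp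
          show ?thesis
          proof (rule ccontr)
            assume "\<not> i < Suc b * gp"
            then have "spl ! (Suc b * gp) \<le> spl ! i"
              using lt[of "Suc b * gp" i] i by (cases "Suc b * gp = i") auto
            then show False using \<open>spl ! i < spl ! (Suc b * gp)\<close> by simp
          qed
        next
          case False then show ?thesis using i by simp
        qed
      next
        case False
        then have "L = Suc b" using b by simp
        then show ?thesis using i NL by simp
      qed
      show "r \<in> (\<lambda>i. spl ! i) ` {b*gp..<Suc b*gp}" using lo hi i by auto
    qed
    then have "card {r\<in>sp. blk L f r = b} \<le> card ((\<lambda>i. spl ! i) ` {b*gp..<Suc b*gp})"
      by (intro card_mono) auto
    also have "\<dots> \<le> card {b*gp..<Suc b*gp}" by (rule card_image_le) simp
    finally show ?thesis by simp
  qed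
  have "card {r. r < K \<and> blk L f r = b \<and> y r - (if r = f (blk L f r) then 0 else y (r - 1)) \<noteq> 0} \<le> P"
    if b: "b < L" and y0: "\<forall>s. s \<notin> sp \<longrightarrow> y s = 0" for b and y :: "nat \<Rightarrow> real"
  proof -
    define A where "A = {r\<in>sp. blk L f r = b}"
    have finA: "finite A" unfolding A_def using finsp by simp
    have sub: "{r. r < K \<and> blk L f r = b \<and> y r - (if r = f (blk L f r) then 0 else y (r - 1)) \<noteq> 0} \<subseteq> A \<union> Suc ` A"
    proof
      fix r assume r: "r \<in> {r. r < K \<and> blk L f r = b \<and> y r - (if r = f (blk L f r) then 0 else y (r - 1)) \<noteq> 0}"
      then have rK: "r < K" and rb: "blk L f r = b" and nz: "y r - (if r = f b then 0 else y (r - 1)) \<noteq> 0" by auto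
      show "r \<in> A \<union> Suc ` A"
      proof (cases "r \<in> sp")
        case True then show ?thesis unfolding A_def using rb by simp
      next
        case False
        then have "y r = 0" using y0 by simp
        then have rne: "r \<noteq> f b" and yr1: "y (r - 1) \<noteq> 0" using nz by (auto split: if_splits)
        have fbr: "f b \<le> r" using blk_props[where L=L and f=f and s=r, OF L f0] rb by simp
        then have r1: "r \<ge> 1" "f b \<le> r - 1" using rne by auto
        have "r - 1 \<in> sp" using yr1 y0 by auto
        moreover have "blk L f (r - 1) = b"
        proof -
          have "b \<le> blk L f (r - 1)" using blk_ge[where b=b and L=L and f=f, OF b r1(2)] .
          moreover have "blk L f (r - 1) \<le> blk L f r" using blk_mono[where L=L and f=f, OF L f0] by simp
          ultimately show ?thesis using rb by simp
        qed
        ultimately have "r - 1 \<in> A" unfolding A_def by simp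
        moreover have "r = Suc (r - 1)" using r1 by simp
        ultimately show ?thesis by blast
      qed
    qed
    have "card {r. r < K \<and> blk L f r = b \<and> y r - (if r = f (blk L f r) then 0 else y (r - 1)) \<noteq> 0}
        \<le> card (A \<union> Suc ` A)" using finA sub by (intro card_mono) auto
    also have "\<dots> \<le> card A + card (Suc ` A)" by (rule card_Un_le)
    also have "\<dots> \<le> card A + card A" using card_image_le[OF finA, of Suc] by simp
    also have "\<dots> \<le> P" using cA[OF b] gpP unfolding A_def by simp
    finally show ?thesis .
  qed
  then show ?thesis using sm f0 by blast
qed

lemma mem_arith:
  fixes K m :: nat
  assumes "16 * K \<le> m^2"
  shows "K \<le> ((m+2) div 4) * ((m - (2*((m+2) div 4) - 1)) div 2)"
proof -
  obtain a c where m: "m = 4*a + c" "c < 4" by (metis div_mod_decomp mod_less_divisor zero_less_numeral mult.commute)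
  have "c = 0 \<or> c = 1 \<or> c = 2 \<or> c = 3" using m(2) by auto
  then show ?thesis
  proof (elim disjE)
    assume c: "c = 0"
    have u: "(m+2) div 4 = a" using m c by presburger
    show ?thesis
    proof (cases "a = 0")
      case True then show ?thesis using assms m c by simp
    next
      case False
      have P: "(m - (2*a - 1)) div 2 = a" using m c False by presburger
      have "16 * K \<le> 16 * (a * a)" using assms m c by (simp add: power2_eq_square algebra_simps)
      then show ?thesis unfolding u P by simp
    qed
  next
    assume c: "c = 1"
    have u: "(m+2) div 4 = a" using m c by presburger
    show ?thesis
    proof (cases "a = 0")
      case True then show ?thesis using assms m c by simp
    next
      case False
      have P: "(m - (2*a - 1)) div 2 = a + 1" using m c False by presburger
      have "16 * K \<le> 16 * (a * a) + 8 * a + 1" using assms m c by (simp add: power2_eq_square algebra_simps)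
      then have "K \<le> a * (a + 1)" by (simp add: algebra_simps)
      then show ?thesis unfolding u P .
    qed
  next
    assume c: "c = 2"
    have u: "(m+2) div 4 = a + 1" using m c by presburger
    have P: "(m - (2*(a+1) - 1)) div 2 = a" using m c by presburger
    have "16 * K \<le> 16 * (a * a) + 16 * a + 4" using assms m c by (simp add: power2_eq_square algebra_simps)
    then have "K \<le> (a + 1) * a" by (simp add: algebra_simps)
    then show ?thesis unfolding u P .
  next
    assume c: "c = 3"
    have u: "(m+2) div 4 = a + 1" using m c by presburger
    have P: "(m - (2*(a+1) - 1)) div 2 = a + 1" using m c by presburger
    have "16 * K \<le> 16 * (a * a) + 24 * a + 9" using assms m c by (simp add: power2_eq_square algebra_simps)
    then have "K \<le> (a + 1) * (a + 1)" by (simp add: algebra_simps)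
    then show ?thesis unfolding u P .
  qed
qed

lemma sparse_arith:
  fixes N m :: nat
  assumes "108 * N + 72 \<le> m^2"
  shows "N \<le> ((m - 4 * (m div 8) + 1) div 2) * (m div 8)"
proof -
  define a where "a = m div 8"
  have m8: "m \<le> 8 * a + 7" "8 * a \<le> m" unfolding a_def by auto
  have L: "(m - 4 * a + 1) div 2 \<ge> 2 * a" using m8 by presburger
  have "m^2 \<le> (8 * a + 7)^2" using m8 by (intro power_mono) auto
  then have "108 * N + 72 \<le> 64 * (a * a) + 112 * a + 49" using assms by (simp add: power2_eq_square algebra_simps)
  moreover have "a \<le> a * a \<or> a = 0" by (cases a) auto
  ultimately have "N \<le> 2 * (a * a)" by linarith
  also have "\<dots> \<le> ((m - 4 * a + 1) div 2) * a" using L by (simp add: mult.assoc[symmetric] mult_right_mono)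
  finally show ?thesis unfolding a_def .
qed

lemma feasible0: "ft_feasible m K 0 TYPE('n::finite)"
  unfolding ft_feasible_def
proof (intro allI impI)
  fix T :: "nat set" and x :: "nat \<Rightarrow> real^'n" and z :: "nat \<Rightarrow> real"
  assume "T \<subseteq> {1..K}" "card T = 0"
  then have T: "T = {}" using finite_subset[of T "{1..K}"] by auto
  show "\<exists>d1 d2 W1 b1 W2 b2 W3 b3. d1 + d2 = m \<and>
            (\<forall>i\<in>T. net3 d1 d2 W1 b1 W2 b2 W3 b3 (x i) = z i) \<and>
            (\<forall>i\<in>{1..K} - T. net3 d1 d2 W1 b1 W2 b2 W3 b3 (x i) = 0)"
    apply (rule exI[of _ m], rule exI[of _ 0], rule exI[of _ "\<lambda>_. 0"], rule exI[of _ "\<lambda>_. 0"],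
           rule exI[of _ "\<lambda>_ _. 0"], rule exI[of _ "\<lambda>_. 0"], rule exI[of _ "\<lambda>_. 0"], rule exI[of _ 0])
    using T by (simp add: net3_def)
qed

lemma cap_props:
  shows "ft_capacity m K TYPE('n::finite) \<le> K"
    and "ft_feasible m K (ft_capacity m K TYPE('n)) TYPE('n)"
    and "N \<le> K \<Longrightarrow> ft_feasible m K N TYPE('n) \<Longrightarrow> N \<le> ft_capacity m K TYPE('n)"
proof -
  have P0: "0 \<le> K \<and> ft_feasible m K 0 TYPE('n)" using feasible0 by simp
  have bnd: "\<forall>y. y \<le> K \<and> ft_feasible m K y TYPE('n) \<longrightarrow> y \<le> K" by simp
  have "ft_capacity m K TYPE('n) \<le> K \<and> ft_feasible m K (ft_capacity m K TYPE('n)) TYPE('n)"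
    unfolding ft_capacity_def
    by (rule GreatestI_nat[where P="\<lambda>N. N \<le> K \<and> ft_feasible m K N TYPE('n)" and k=0 and b=K, OF P0]) simp
  then show "ft_capacity m K TYPE('n) \<le> K" "ft_feasible m K (ft_capacity m K TYPE('n)) TYPE('n)" by auto
  show "N \<le> K \<Longrightarrow> ft_feasible m K N TYPE('n) \<Longrightarrow> N \<le> ft_capacity m K TYPE('n)"
    unfolding ft_capacity_def by (rule Greatest_le_nat[where b=K]) auto
qed

lemma mem_feasible:
  fixes K m :: nat
  assumes K1: "K \<ge> 1" and Km: "16 * K \<le> m^2"
  shows "ft_feasible m K K TYPE('n::finite)"
proof -
  define u where "u = (m + 2) div 4"
  define d1 where "d1 = 2 * u - 1"
  define d2 where "d2 = m - d1"
  define P where "P = d2 div 2"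
  have m4: "m \<ge> 4"
  proof (rule ccontr)
    assume "\<not> m \<ge> 4"
    then have "m^2 \<le> 3^2" by (intro power_mono) auto
    then show False using Km K1 by simp
  qed
  have u1: "u \<ge> 1" unfolding u_def using m4 by simp
  have d1m: "d1 \<le> m" unfolding d1_def u_def by simp
  have KP: "K \<le> u * P" using mem_arith[OF Km] unfolding u_def P_def d2_def d1_def by simp
  then have P1: "P \<ge> 1" using K1 by (cases P) auto
  show ?thesis
  proof (rule feas_core[where ?d1.0=d1 and ?d2.0=d2 and L=u and P=P])
    show "K \<ge> 1" by fact
    show "d1 + d2 = m" unfolding d2_def using d1m by simp
    show "u \<ge> 1" by fact
    show "2 * u - 1 \<le> d1" unfolding d1_def by simp
    show "2 * P \<le> d2" unfolding P_def by simp
    fix sp :: "nat set"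
    show "\<exists>f. strict_mono f \<and> f 0 = 0 \<and>
       (\<forall>y::nat\<Rightarrow>real. (\<forall>s. s \<notin> sp \<longrightarrow> y s = 0) \<longrightarrow>
          (\<forall>b<u. card {r. r < K \<and> blk u f r = b \<and> y r - (if r = f (blk u f r) then 0 else y (r - 1)) \<noteq> 0} \<le> P))"
      using blocks_mem[OF P1 _ u1] KP by (simp add: mult.commute)
  qed
qed

lemma sparse_feasible:
  fixes K m N :: nat
  assumes N1: "N \<ge> 1" and NK: "N \<le> K" and Nm: "108 * N + 72 \<le> m^2"
  shows "ft_feasible m K N TYPE('n::finite)"
proof -
  define v where "v = m div 8"
  define d2 where "d2 = 4 * v"
  define d1 where "d1 = m - 4 * v"
  define L where "L = (d1 + 1) div 2"
  define P where "P = 2 * v"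
  have m14: "m \<ge> 8"
  proof (rule ccontr)
    assume "\<not> m \<ge> 8"
    then have "m^2 \<le> 7^2" by (intro power_mono) auto
    then show False using Nm N1 by simp
  qed
  have v1: "v \<ge> 1" unfolding v_def using m14 by simp
  have d1pos: "d1 \<ge> 1" unfolding d1_def v_def using m14 by simp
  have L1: "L \<ge> 1" unfolding L_def using d1pos by simp
  have NL: "N \<le> L * v" using sparse_arith[OF Nm] unfolding L_def d1_def v_def .
  show ?thesis
  proof (rule feas_core[where ?d1.0=d1 and ?d2.0=d2 and L=L and P=P])
    show "K \<ge> 1" using N1 NK by simp
    show "d1 + d2 = m" unfolding d1_def d2_def v_def by simp
    show "L \<ge> 1" by fact
    show "2 * L - 1 \<le> d1" unfolding L_def by simp
    show "2 * P \<le> d2" unfolding P_def d2_def by simp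
    fix sp :: "nat set"
    assume "sp \<subseteq> {..<K}" "card sp = N"
    then show "\<exists>f. strict_mono f \<and> f 0 = 0 \<and>
       (\<forall>y::nat\<Rightarrow>real. (\<forall>s. s \<notin> sp \<longrightarrow> y s = 0) \<longrightarrow>
          (\<forall>b<L. card {r. r < K \<and> blk L f r = b \<and> y r - (if r = f (blk L f r) then 0 else y (r - 1)) \<noteq> 0} \<le> P))"
      using blocks_ft[where gp=v and P=P and N=N and L=L and K=K, OF v1 _ NL L1] unfolding P_def by simp
  qed
qed

lemma ar1: "(M::real) \<ge> 0 \<Longrightarrow> x \<ge> 0 \<Longrightarrow> (M + x + 4)/2 \<le> k \<Longrightarrow> M/108 - 2/3 \<le> k" by (simp add: field_simps)
lemma ar2: "4*p \<le> (M::real) \<Longrightarrow> 3*x \<le> M \<Longrightarrow> (M + x + 4)/2 \<le> k \<Longrightarrow> 3 \<le> x \<Longrightarrow> x + p + 2 < k" by (simp add: field_simps)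
lemma ar3: "4*p \<le> (M::real) \<Longrightarrow> 3*x \<le> M \<Longrightarrow> (M + x)/6 < n \<Longrightarrow> 3 \<le> x \<Longrightarrow> x + p + 2 < 3*n + 2" by (simp add: field_simps)

lemma lower_cap:
  fixes K m :: nat
  assumes Kb: "(real m)^2 / 108 - 2/3 \<le> real K"
  shows "\<lfloor>(real m)^2 / 108 - 2/3\<rfloor> \<le> int (ft_capacity m K TYPE('n::finite))"
proof (cases "\<lfloor>(real m)^2 / 108 - 2/3\<rfloor> \<le> 0")
  case True then show ?thesis by linarith
next
  case False
  define F where "F = \<lfloor>(real m)^2 / 108 - 2/3\<rfloor>"
  define N0 where "N0 = nat F"
  have F1: "F \<ge> 1" using False unfolding F_def by simp
  have N0F: "int N0 = F" unfolding N0_def using F1 by simp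
  have rN: "real N0 \<le> (real m)^2 / 108 - 2/3"
  proof -
    have "real_of_int F \<le> (real m)^2 / 108 - 2/3" unfolding F_def by (rule of_int_floor_le)
    moreover have "real N0 = real_of_int F" using N0F by (metis of_int_of_nat_eq)
    ultimately show ?thesis by simp
  qed
  have "real (108 * N0 + 72) \<le> real (m^2)" using rN by simp
  then have Nm: "108 * N0 + 72 \<le> m^2" by (simp only: of_nat_le_iff)
  have N1: "N0 \<ge> 1" using F1 N0F by simp
  have NK: "N0 \<le> K" using rN Kb by simp
  have "ft_feasible m K N0 TYPE('n)" by (rule sparse_feasible[OF N1 NK Nm])
  then have "N0 \<le> ft_capacity m K TYPE('n)" by (rule cap_props(3)[OF NK])
  then show ?thesis using N0F unfolding F_def by simp
qed

lemma upper_cap: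
  fixes K m :: nat
  assumes K3: "K \<ge> 3" and Kb: "real K \<ge> ((real m)^2 + real m + 4) / 2"
  shows "real (ft_capacity m K TYPE('n::finite)) \<le> ((real m)^2 + real m) / 6"
proof (rule ccontr)
  define N where "N = ft_capacity m K TYPE('n)"
  assume "\<not> ?thesis"
  then have Nb: "real N > ((real m)^2 + real m) / 6" unfolding N_def by simp
  have NK: "N \<le> K" unfolding N_def by (rule cap_props(1))
  have feas: "ft_feasible m K N TYPE('n)" unfolding N_def by (rule cap_props(2))
  have N1: "N \<ge> 1"
  proof -
    have "((real m)^2 + real m) / 6 \<ge> 0" by simp
    then have "real N > 0" using Nb by linarith
    then show ?thesis by simp
  qed
  have H: "d1 = 0 \<or> d2 = 0 \<or> (d1 = 1 \<and> d2 = 1 \<and> K \<ge> 4) \<or> d1 + d2 * (d1 + 1) + 2 < min K (3 * N + 2)"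
    if dd: "d1 + d2 = m" for d1 d2
  proof (cases "d1 = 0 \<or> d2 = 0")
    case True then show ?thesis by blast
  next
    case False
    show ?thesis
    proof (cases "m = 2")
      case True
      then have "d1 = 1" "d2 = 1" using False dd by auto
      moreover have "real K \<ge> 5" using Kb True by simp
      ultimately show ?thesis by simp
    next
      case m2: False
      have m3: "m \<ge> 3" using False dd m2 by auto
      have rm: "real m = real d1 + real d2" using dd by simp
      have sq: "4 * (real d1 * real d2) \<le> (real m)^2"
      proof -
        have "0 \<le> (real d1 - real d2)^2" by simp
        moreover have "(real d1 + real d2)^2 = (real d1 - real d2)^2 + 4 * (real d1 * real d2)"
          by (simp add: power2_eq_square algebra_simps)
        ultimately show ?thesis using rm by simp
      qed
      have mm: "(real m)^2 \<ge> 3 * real m" using m3 by (simp add: power2_eq_square)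
      have e: "real (d1 + d2 * (d1 + 1) + 2) = real m + real d1 * real d2 + 2" using rm by (simp add: algebra_simps)
      have rm3: "real m \<ge> 3" using m3 by simp
      have c1': "real m + real d1 * real d2 + 2 < real K" by (rule ar2[OF sq mm Kb rm3])
      have c2': "real m + real d1 * real d2 + 2 < 3 * real N + 2" by (rule ar3[OF sq mm Nb rm3])
      have c1: "real (d1 + d2 * (d1 + 1) + 2) < real K" by (subst e) (rule c1')
      have e3: "real (3 * N + 2) = 3 * real N + 2" by simp
      have c2: "real (d1 + d2 * (d1 + 1) + 2) < real (3 * N + 2)" by (subst e, subst e3) (rule c2')
      have "d1 + d2 * (d1 + 1) + 2 < K" using c1 by (simp only: of_nat_less_iff)
      moreover have "d1 + d2 * (d1 + 1) + 2 < 3 * N + 2" using c2 by (simp only: of_nat_less_iff)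
      ultimately show ?thesis by simp
    qed
  qed
  have "\<not> ft_feasible m K N TYPE('n)" by (rule upper_nf[OF K3 NK N1 H])
  then show False using feas by simp
qed

theorem corollary5p3:
  fixes K m :: nat
  assumes "K \<ge> 3"
  shows "(int K \<le> \<lfloor>(real m)^2 / 16\<rfloor> \<longrightarrow> ft_capacity m K TYPE('n::finite) = K)
       \<and> (\<lfloor>(real m)^2 / 16\<rfloor> + 1 \<le> int K \<and> real K < ((real m)^2 + real m + 4) / 2 \<longrightarrow>
            \<lfloor>(real m)^2 / 108 - 2/3\<rfloor> \<le> int (ft_capacity m K TYPE('n)) \<and> ft_capacity m K TYPE('n) \<le> K)
       \<and> (real K \<ge> ((real m)^2 + real m + 4) / 2 \<longrightarrow>
            \<lfloor>(real m)^2 / 108 - 2/3\<rfloor> \<le> int (ft_capacity m K TYPE('n)) \<and>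
            real (ft_capacity m K TYPE('n)) \<le> ((real m)^2 + real m) / 6)"
proof (intro conjI impI)
  assume h: "int K \<le> \<lfloor>(real m)^2 / 16\<rfloor>"
  then have "real K \<le> (real m)^2 / 16" by (simp add: le_floor_iff)
  then have "real (16 * K) \<le> real (m^2)" by simp
  then have Km: "16 * K \<le> m^2" by (simp only: of_nat_le_iff)
  have K1: "K \<ge> 1" using assms by simp
  have "ft_feasible m K K TYPE('n)" by (rule mem_feasible[OF K1 Km])
  then have c1: "K \<le> ft_capacity m K TYPE('n)" by (rule cap_props(3)[OF order_refl])
  have c2: "ft_capacity m K TYPE('n) \<le> K" by (rule cap_props(1))
  show "ft_capacity m K TYPE('n) = K" using c1 c2 by (rule antisym[rotated])
next
  assume h: "\<lfloor>(real m)^2 / 16\<rfloor> + 1 \<le> int K \<and> real K < ((real m)^2 + real m + 4) / 2"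
  have "(real m)^2 / 16 < real_of_int (\<lfloor>(real m)^2 / 16\<rfloor> + 1)" by linarith
  also have "\<dots> \<le> real K" using h by (metis of_int_le_iff of_int_of_nat_eq)
  finally have "(real m)^2 / 16 < real K" .
  moreover have "(real m)^2 / 108 - 2/3 \<le> (real m)^2 / 16" using zero_le_power2[of "real m"] by linarith
  ultimately have "(real m)^2 / 108 - 2/3 \<le> real K" by linarith
  then show "\<lfloor>(real m)^2 / 108 - 2/3\<rfloor> \<le> int (ft_capacity m K TYPE('n))" by (rule lower_cap)
next
  show "ft_capacity m K TYPE('n) \<le> K" by (rule cap_props(1))
next
  assume h: "real K \<ge> ((real m)^2 + real m + 4) / 2"
  have "(real m)^2 / 108 - 2/3 \<le> real K" by (rule ar1[OF _ _ h]) simp_all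
  then show "\<lfloor>(real m)^2 / 108 - 2/3\<rfloor> \<le> int (ft_capacity m K TYPE('n))" by (rule lower_cap)
next
  assume h: "real K \<ge> ((real m)^2 + real m + 4) / 2"
  show "real (ft_capacity m K TYPE('n)) \<le> ((real m)^2 + real m) / 6" by (rule upper_cap[OF assms h])
qed


end
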